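(* The identities (A9) $x\wedge(y\wedge z)\approx z\wedge(y\wedge x)$, (J4) $x''\approx x$, (J5) $x'\approx (x\wedge y)'\wedge(x\wedge y')'$ form a 3-base for the variety $\mathbb{BA}$ of Boolean algebras (in the language $\langle\wedge,{}'\rangle$).
   Context: Algebras are of type $\langle \wedge, {}'\rangle$ with $\wedge$ binary and ${}'$ unary. The variety $\mathbb{BA}$ of Boolean algebras in this language consists of the algebras $\langle B,\wedge,{}'\rangle$ obtained from Boolean algebras by keeping only meet and complement (equivalently, the variety generated by the two-element Boolean algebra with meet and complement). A base for a variety is an independent set of identities (no identity in the set follows from the others) that defines the variety; an $n$-base is a base with exactly $n$ identities. *)

theory Defs
  imports Main
begin

datatype trm = Var nat | Meet trm trm | Cmp trm

type_synonym identity = "trm \<times> trm"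

fun eval :: "('a \<Rightarrow> 'a \<Rightarrow> 'a) \<Rightarrow> ('a \<Rightarrow> 'a) \<Rightarrow> (nat \<Rightarrow> 'a) \<Rightarrow> trm \<Rightarrow> 'a" where
  "eval m c v (Var i) = v i"
| "eval m c v (Meet s t) = m (eval m c v s) (eval m c v t)"
| "eval m c v (Cmp s) = c (eval m c v s)"

definition algebra :: "'a set \<Rightarrow> ('a \<Rightarrow> 'a \<Rightarrow> 'a) \<Rightarrow> ('a \<Rightarrow> 'a) \<Rightarrow> bool" where
  "algebra A m c \<longleftrightarrow> A \<noteq> {} \<and> (\<forall>x\<in>A. \<forall>y\<in>A. m x y \<in> A) \<and> (\<forall>x\<in>A. c x \<in> A)"

definition sat :: "'a set \<Rightarrow> ('a \<Rightarrow> 'a \<Rightarrow> 'a) \<Rightarrow> ('a \<Rightarrow> 'a) \<Rightarrow> identity \<Rightarrow> bool" where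
  "sat A m c e \<longleftrightarrow> (\<forall>v. (\<forall>i. v i \<in> A) \<longrightarrow> eval m c v (fst e) = eval m c v (snd e))"

definition models :: "'a set \<Rightarrow> ('a \<Rightarrow> 'a \<Rightarrow> 'a) \<Rightarrow> ('a \<Rightarrow> 'a) \<Rightarrow> identity set \<Rightarrow> bool" where
  "models A m c \<Sigma> \<longleftrightarrow> (\<forall>e\<in>\<Sigma>. sat A m c e)"

text \<open>Membership in the variety BA = variety generated by the two-element Boolean
  algebra (bool, conjunction, negation) = models of its equational theory (Birkhoff).\<close>
definition in_BA :: "'a set \<Rightarrow> ('a \<Rightarrow> 'a \<Rightarrow> 'a) \<Rightarrow> ('a \<Rightarrow> 'a) \<Rightarrow> bool" where
  "in_BA A m c \<longleftrightarrow> algebra A m c \<and>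
     (\<forall>e. sat (UNIV :: bool set) (\<and>) Not e \<longrightarrow> sat A m c e)"

abbreviation "vx \<equiv> Var 0"
abbreviation "vy \<equiv> Var 1"
abbreviation "vz \<equiv> Var 2"

definition A9 :: identity where
  "A9 = (Meet vx (Meet vy vz), Meet vz (Meet vy vx))"
definition J4 :: identity where
  "J4 = (Cmp (Cmp vx), vx)"
definition J5 :: identity where
  "J5 = (Cmp vx, Meet (Cmp (Meet vx vy)) (Cmp (Meet vx (Cmp vy))))"

definition defines_BA :: "'a itself \<Rightarrow> identity set \<Rightarrow> bool" where
  "defines_BA _ \<Sigma> \<longleftrightarrow>
     (\<forall>(A::'a set) m c. algebra A m c \<longrightarrow> (models A m c \<Sigma> \<longleftrightarrow> in_BA A m c))"

definition independent :: "identity set \<Rightarrow> bool" where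
  "independent \<Sigma> \<longleftrightarrow>
     (\<forall>e\<in>\<Sigma>. \<exists>(B::nat set) m c. algebra B m c \<and> models B m c (\<Sigma> - {e}) \<and> \<not> sat B m c e)"

end

theory Submission imports Defs begin

locale ba3 = fixes A :: "'a set" and m :: "'a \<Rightarrow> 'a \<Rightarrow> 'a" and c :: "'a \<Rightarrow> 'a" and a0 :: 'a
 assumes cl: "\<And>x y. x\<in>A \<Longrightarrow> y\<in>A \<Longrightarrow> m x y \<in> A" "\<And>x. x\<in>A \<Longrightarrow> c x \<in> A" "a0 \<in> A"
 and a9: "\<And>x y z. x\<in>A \<Longrightarrow> y\<in>A \<Longrightarrow> z\<in>A \<Longrightarrow> m x (m y z) = m z (m y x)"
 and j4: "\<And>x. x\<in>A \<Longrightarrow> c (c x) = x"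
 and j5: "\<And>x y. x\<in>A \<Longrightarrow> y\<in>A \<Longrightarrow> c x = m (c (m x y)) (c (m x (c y)))"
begin

lemma comm_f20: "x0 \<in> A \<Longrightarrow> x1 \<in> A \<Longrightarrow> x2 \<in> A \<Longrightarrow> (m (c (m x0 (c x1))) (m (c (m x0 x1)) x2)) = (m x2 (c x0))"
  by (metis a9 j5 cl)
lemma comm_f472: "x10 \<in> A \<Longrightarrow> x11 \<in> A \<Longrightarrow> x9 \<in> A \<Longrightarrow> (m (m (c (m x9 x10)) x11) (c x9)) = (m (c (m x9 (c (c x10)))) (m x11 (c x9)))"
  by (metis comm_f20 comm_f20 cl)
lemma comm_f536: "x10 \<in> A \<Longrightarrow> x11 \<in> A \<Longrightarrow> x9 \<in> A \<Longrightarrow> (m (m (c (m x9 x10)) x11) (c x9)) = (m (c (m x9 x10)) (m x11 (c x9)))"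
  by (metis comm_f472 j4 cl)
lemma comm_f537: "x10 \<in> A \<Longrightarrow> x11 \<in> A \<Longrightarrow> x9 \<in> A \<Longrightarrow> (m (m (c (m x9 x10)) x11) (c x9)) = (m (c x9) (m x11 (c (m x9 x10))))"
  by (metis comm_f536 a9 cl)
lemma comm_f15: "x0 \<in> A \<Longrightarrow> x1 \<in> A \<Longrightarrow> x2 \<in> A \<Longrightarrow> (c x0) = (m (c (m x2 (m x1 x0))) (c (m x0 (c (m x1 x2)))))"
  by (metis j5 a9 cl)
lemma comm_f4185: "x4 \<in> A \<Longrightarrow> x5 \<in> A \<Longrightarrow> x6 \<in> A \<Longrightarrow> (m (c x4) (m (c (m x6 (c (m x5 x4)))) (c (m x4 (m x5 x6))))) = (m (c x6) (c x4))"
  by (metis comm_f537 comm_f15 cl)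
lemma comm_f18: "x0 \<in> A \<Longrightarrow> x1 \<in> A \<Longrightarrow> (c x1) = (m (c (m x1 (c x0))) (c (m x1 x0)))"
  by (metis j5 j4 cl)
lemma comm_f32: "x0 \<in> A \<Longrightarrow> x1 \<in> A \<Longrightarrow> x2 \<in> A \<Longrightarrow> (c x0) = (m (c (m x0 (c (m x1 x2)))) (c (m x2 (m x1 x0))))"
  by (metis comm_f18 a9 cl)
lemma comm_f4298: "x4 \<in> A \<Longrightarrow> x6 \<in> A \<Longrightarrow> (m (c x6) (c x4)) = (m (c x4) (c x6))"
  by (metis comm_f4185 comm_f32 cl)
lemma comm_f4327: "x0 \<in> A \<Longrightarrow> x1 \<in> A \<Longrightarrow> (m x0 (c x1)) = (m (c x1) x0)"
  by (metis comm_f4298 j4 cl)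
lemma comm_f4516: "x0 \<in> A \<Longrightarrow> x1 \<in> A \<Longrightarrow> (m x1 x0) = (m x0 x1)"
  by (metis comm_f4327 j4 cl)
lemma comm: "x \<in> A \<Longrightarrow> y \<in> A \<Longrightarrow> (m x y) = (m y x)"
  by (metis comm_f4516 cl)

lemma assoc_f20: "x0 \<in> A \<Longrightarrow> x1 \<in> A \<Longrightarrow> x2 \<in> A \<Longrightarrow> (m (c (m x0 (c x1))) (m (c (m x0 x1)) x2)) = (m x2 (c x0))"
  by (metis a9 j5 cl)
lemma assoc_f472: "x10 \<in> A \<Longrightarrow> x11 \<in> A \<Longrightarrow> x9 \<in> A \<Longrightarrow> (m (m (c (m x9 x10)) x11) (c x9)) = (m (c (m x9 (c (c x10)))) (m x11 (c x9)))"
  by (metis assoc_f20 assoc_f20 cl)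
lemma assoc_f536: "x10 \<in> A \<Longrightarrow> x11 \<in> A \<Longrightarrow> x9 \<in> A \<Longrightarrow> (m (m (c (m x9 x10)) x11) (c x9)) = (m (c (m x9 x10)) (m x11 (c x9)))"
  by (metis assoc_f472 j4 cl)
lemma assoc_f537: "x10 \<in> A \<Longrightarrow> x11 \<in> A \<Longrightarrow> x9 \<in> A \<Longrightarrow> (m (m (c (m x9 x10)) x11) (c x9)) = (m (c x9) (m x11 (c (m x9 x10))))"
  by (metis assoc_f536 a9 cl)
lemma assoc_f15: "x0 \<in> A \<Longrightarrow> x1 \<in> A \<Longrightarrow> x2 \<in> A \<Longrightarrow> (c x0) = (m (c (m x2 (m x1 x0))) (c (m x0 (c (m x1 x2)))))"
  by (metis j5 a9 cl)
lemma assoc_f4185: "x4 \<in> A \<Longrightarrow> x5 \<in> A \<Longrightarrow> x6 \<in> A \<Longrightarrow> (m (c x4) (m (c (m x6 (c (m x5 x4)))) (c (m x4 (m x5 x6))))) = (m (c x6) (c x4))"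
  by (metis assoc_f537 assoc_f15 cl)
lemma assoc_f18: "x0 \<in> A \<Longrightarrow> x1 \<in> A \<Longrightarrow> (c x1) = (m (c (m x1 (c x0))) (c (m x1 x0)))"
  by (metis j5 j4 cl)
lemma assoc_f32: "x0 \<in> A \<Longrightarrow> x1 \<in> A \<Longrightarrow> x2 \<in> A \<Longrightarrow> (c x0) = (m (c (m x0 (c (m x1 x2)))) (c (m x2 (m x1 x0))))"
  by (metis assoc_f18 a9 cl)
lemma assoc_f4298: "x4 \<in> A \<Longrightarrow> x6 \<in> A \<Longrightarrow> (m (c x6) (c x4)) = (m (c x4) (c x6))"
  by (metis assoc_f4185 assoc_f32 cl)
lemma assoc_f4327: "x0 \<in> A \<Longrightarrow> x1 \<in> A \<Longrightarrow> (m x0 (c x1)) = (m (c x1) x0)"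
  by (metis assoc_f4298 j4 cl)
lemma assoc_f4516: "x0 \<in> A \<Longrightarrow> x1 \<in> A \<Longrightarrow> (m x1 x0) = (m x0 x1)"
  by (metis assoc_f4327 j4 cl)
lemma assoc_f4801: "x2 \<in> A \<Longrightarrow> x3 \<in> A \<Longrightarrow> x4 \<in> A \<Longrightarrow> (m x4 (m x3 x2)) = (m x3 (m x2 x4))"
  by (metis a9 assoc_f4516 cl)
lemma assoc: "x \<in> A \<Longrightarrow> y \<in> A \<Longrightarrow> z \<in> A \<Longrightarrow> (m (m x y) z) = (m x (m y z))"
  by (metis assoc_f4516 assoc_f4801 cl)

lemma idem_f696: "x46 \<in> A \<Longrightarrow> x47 \<in> A \<Longrightarrow> (c (c (m x46 x47))) = (m (c (c x46)) (c (m (c (m x46 x47)) (c (c (m x46 (c x47)))))))"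
  by (metis j5 j5 cl)
lemma idem_f724: "x46 \<in> A \<Longrightarrow> x47 \<in> A \<Longrightarrow> (c (c (m x46 x47))) = (m (c (c x46)) (c (m (c (m x46 x47)) (m x46 (c x47)))))"
  by (metis idem_f696 j4 cl)
lemma idem_f725: "x46 \<in> A \<Longrightarrow> x47 \<in> A \<Longrightarrow> (c (c (m x46 x47))) = (m (c (c x46)) (c (m (c x47) (m x46 (c (m x46 x47))))))"
  by (metis idem_f724 a9 cl)
lemma idem_f726: "x46 \<in> A \<Longrightarrow> x47 \<in> A \<Longrightarrow> (c (c (m x46 x47))) = (m x46 (c (m (c x47) (m x46 (c (m x46 x47))))))"
  by (metis idem_f725 j4 cl)
lemma idem_f727: "x46 \<in> A \<Longrightarrow> x47 \<in> A \<Longrightarrow> (m x46 x47) = (m x46 (c (m (c x47) (m x46 (c (m x46 x47))))))"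
  by (metis idem_f726 j4 cl)
lemma idem_f708: "x10 \<in> A \<Longrightarrow> x11 \<in> A \<Longrightarrow> x12 \<in> A \<Longrightarrow> (m (c (m x10 x11)) (m (c (m x10 (c x11))) x12)) = (m (c x10) x12)"
  by (metis assoc j5 cl)
lemma idem_f680: "x0 \<in> A \<Longrightarrow> x1 \<in> A \<Longrightarrow> (c x0) = (m (c (m x1 x0)) (c (m x0 (c x1))))"
  by (metis j5 comm cl)
lemma idem_f758: "x0 \<in> A \<Longrightarrow> x1 \<in> A \<Longrightarrow> (c x1) = (m (c (m (c x0) x1)) (c (m x1 x0)))"
  by (metis idem_f680 j4 cl)
lemma idem_f1068: "x0 \<in> A \<Longrightarrow> x1 \<in> A \<Longrightarrow> (c x0) = (m (c (m (c x1) x0)) (c (m x1 x0)))"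
  by (metis idem_f758 comm cl)
lemma idem_f34500: "x14 \<in> A \<Longrightarrow> x15 \<in> A \<Longrightarrow> (m (c (c x14)) (c (m x14 (c x15)))) = (m (c (m (c x14) x15)) (c (c x15)))"
  by (metis idem_f708 idem_f1068 cl)
lemma idem_f34645: "x14 \<in> A \<Longrightarrow> x15 \<in> A \<Longrightarrow> (m (c (c x14)) (c (m x14 (c x15)))) = (m (c (m (c x14) x15)) x15)"
  by (metis idem_f34500 j4 cl)
lemma idem_f34646: "x14 \<in> A \<Longrightarrow> x15 \<in> A \<Longrightarrow> (m (c (m (c x14) x15)) x15) = (m x14 (c (m x14 (c x15))))"
  by (metis idem_f34645 j4 cl)
lemma idem_f37071: "x2 \<in> A \<Longrightarrow> x3 \<in> A \<Longrightarrow> (m x2 (c x3)) = (m x2 (c (m (c (c x3)) (m (c (m (c x2) x3)) x3))))"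
  by (metis idem_f727 idem_f34646 cl)
lemma idem_f37094: "x2 \<in> A \<Longrightarrow> x3 \<in> A \<Longrightarrow> (m x2 (c x3)) = (m x2 (c (m x3 (m (c (m (c x2) x3)) (c (c x3))))))"
  by (metis idem_f37071 a9 cl)
lemma idem_f17: "x0 \<in> A \<Longrightarrow> x1 \<in> A \<Longrightarrow> x2 \<in> A \<Longrightarrow> (m x2 (m x1 x0)) = (m x1 (m x0 x2))"
  by (metis a9 comm cl)
lemma idem_f75: "x6 \<in> A \<Longrightarrow> x7 \<in> A \<Longrightarrow> x8 \<in> A \<Longrightarrow> (m x8 (m x7 x6)) = (m x8 (m x6 x7))"
  by (metis idem_f17 a9 cl)
lemma idem_f37095: "x2 \<in> A \<Longrightarrow> x3 \<in> A \<Longrightarrow> (m x2 (c x3)) = (m x2 (c (m x3 (m (c (c x3)) (c (m (c x2) x3))))))"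
  by (metis idem_f37094 idem_f75 cl)
lemma idem_f37096: "x2 \<in> A \<Longrightarrow> x3 \<in> A \<Longrightarrow> (m x2 (c x3)) = (m x2 (c (m x3 (m x3 (c (m (c x2) x3))))))"
  by (metis idem_f37095 j4 cl)
lemma idem_f34499: "x12 \<in> A \<Longrightarrow> x13 \<in> A \<Longrightarrow> (m (c (c x12)) (c (m (c x13) x12))) = (m (c (m (c x12) x13)) (c (c x13)))"
  by (metis idem_f708 idem_f758 cl)
lemma idem_f34643: "x12 \<in> A \<Longrightarrow> x13 \<in> A \<Longrightarrow> (m (c (c x12)) (c (m (c x13) x12))) = (m (c (m (c x12) x13)) x13)"
  by (metis idem_f34499 j4 cl)
lemma idem_f34644: "x12 \<in> A \<Longrightarrow> x13 \<in> A \<Longrightarrow> (m (c (m (c x12) x13)) x13) = (m x12 (c (m (c x13) x12)))"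
  by (metis idem_f34643 j4 cl)
lemma idem_f34768: "x0 \<in> A \<Longrightarrow> x1 \<in> A \<Longrightarrow> (m x0 (c (m (c x1) x0))) = (m (c (m x1 (c x0))) x1)"
  by (metis idem_f34644 comm cl)
lemma idem_f37153: "x11 \<in> A \<Longrightarrow> x12 \<in> A \<Longrightarrow> (m (c x11) x11) = (m (c (m x11 x12)) (m x12 (c (m (c x11) x12))))"
  by (metis idem_f708 idem_f34768 cl)
lemma idem_f37199: "x11 \<in> A \<Longrightarrow> x12 \<in> A \<Longrightarrow> (m (c (m x11 x12)) (m x12 (c (m (c x11) x12)))) = (m x11 (c x11))"
  by (metis idem_f37153 comm cl)
lemma idem_f62: "x6 \<in> A \<Longrightarrow> x7 \<in> A \<Longrightarrow> x8 \<in> A \<Longrightarrow> (m x8 (m x7 x6)) = (m x7 (m x8 x6))"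
  by (metis idem_f17 a9 cl)
lemma idem_f161: "x18 \<in> A \<Longrightarrow> x19 \<in> A \<Longrightarrow> x20 \<in> A \<Longrightarrow> (m x19 (m x18 x20)) = (m (m x19 x20) x18)"
  by (metis idem_f62 comm cl)
lemma idem_f759: "x0 \<in> A \<Longrightarrow> x1 \<in> A \<Longrightarrow> (c x0) = (m (c (m x1 x0)) (c (m (c x1) x0)))"
  by (metis idem_f680 comm cl)
lemma idem_f1256: "x51 \<in> A \<Longrightarrow> x52 \<in> A \<Longrightarrow> x53 \<in> A \<Longrightarrow> (m (c x52) x53) = (m (c (m x51 x52)) (m x53 (c (m (c x51) x52))))"
  by (metis idem_f161 idem_f759 cl)
lemma idem_f60125: "x4 \<in> A \<Longrightarrow> x5 \<in> A \<Longrightarrow> (m x4 (c x4)) = (m (c x5) x5)"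
  by (metis idem_f37199 idem_f1256 cl)
lemma idem_f60249: "x7 \<in> A \<Longrightarrow> x8 \<in> A \<Longrightarrow> x9 \<in> A \<Longrightarrow> (m x9 (c x9)) = (m x8 (m x7 (c (m x7 x8))))"
  by (metis idem_f60125 a9 cl)
lemma idem_f73340: "x511 \<in> A \<Longrightarrow> x512 \<in> A \<Longrightarrow> (m x511 (c (c x511))) = (m x511 (c (m x512 (c x512))))"
  by (metis idem_f37096 idem_f60249 cl)
lemma idem_f73625: "x511 \<in> A \<Longrightarrow> x512 \<in> A \<Longrightarrow> (m x511 (c (m x512 (c x512)))) = (m x511 x511)"
  by (metis idem_f73340 j4 cl)
lemma idem_f73832: "x19 \<in> A \<Longrightarrow> x20 \<in> A \<Longrightarrow> (m x20 (c x20)) = (m (c x19) (m x19 x19))"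
  by (metis idem_f60249 idem_f73625 cl)
lemma idem_f75693: "x189 \<in> A \<Longrightarrow> x190 \<in> A \<Longrightarrow> (m x190 x190) = (m x190 (c (m (c x189) (m x189 x189))))"
  by (metis idem_f73625 idem_f73832 cl)
lemma idem_f695: "x43 \<in> A \<Longrightarrow> x44 \<in> A \<Longrightarrow> x45 \<in> A \<Longrightarrow> (c (m x43 x44)) = (m (c (m x43 (m x44 x45))) (c (m (m x43 x44) (c x45))))"
  by (metis j5 assoc cl)
lemma idem_f723: "x43 \<in> A \<Longrightarrow> x44 \<in> A \<Longrightarrow> x45 \<in> A \<Longrightarrow> (c (m x43 x44)) = (m (c (m x43 (m x44 x45))) (c (m x43 (m x44 (c x45)))))"
  by (metis idem_f695 assoc cl)
lemma idem_f21: "x6 \<in> A \<Longrightarrow> x7 \<in> A \<Longrightarrow> x8 \<in> A \<Longrightarrow> (m x8 (m x7 x6)) = (m (m x7 x8) x6)"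
  by (metis a9 comm cl)
lemma idem_f37335: "x37 \<in> A \<Longrightarrow> x38 \<in> A \<Longrightarrow> x39 \<in> A \<Longrightarrow> x40 \<in> A \<Longrightarrow> (c (m (m x37 x38) x39)) = (m (c (m (m x37 x38) (m x39 x40))) (c (m x38 (m x37 (m x39 (c x40))))))"
  by (metis idem_f723 idem_f21 cl)
lemma idem_f37450: "x37 \<in> A \<Longrightarrow> x38 \<in> A \<Longrightarrow> x39 \<in> A \<Longrightarrow> x40 \<in> A \<Longrightarrow> (c (m (m x37 x38) x39)) = (m (c (m x37 (m x38 (m x39 x40)))) (c (m x38 (m x37 (m x39 (c x40))))))"
  by (metis idem_f37335 assoc cl)
lemma idem_f19: "x6 \<in> A \<Longrightarrow> x7 \<in> A \<Longrightarrow> x8 \<in> A \<Longrightarrow> x9 \<in> A \<Longrightarrow> (m (m x7 x8) (m x6 x9)) = (m x9 (m x8 (m x7 x6)))"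
  by (metis a9 a9 cl)
lemma idem_f1934: "x118 \<in> A \<Longrightarrow> x119 \<in> A \<Longrightarrow> x120 \<in> A \<Longrightarrow> x121 \<in> A \<Longrightarrow> (c (m x119 (m x120 x121))) = (m (c (m (m x120 x119) (m x121 x118))) (c (m (m x119 (m x120 x121)) (c x118))))"
  by (metis idem_f680 idem_f19 cl)
lemma idem_f2116: "x118 \<in> A \<Longrightarrow> x119 \<in> A \<Longrightarrow> x120 \<in> A \<Longrightarrow> x121 \<in> A \<Longrightarrow> (c (m x119 (m x120 x121))) = (m (c (m (m x120 x119) (m x121 x118))) (c (m x119 (m (m x120 x121) (c x118)))))"
  by (metis idem_f1934 assoc cl)
lemma idem_f2117: "x118 \<in> A \<Longrightarrow> x119 \<in> A \<Longrightarrow> x120 \<in> A \<Longrightarrow> x121 \<in> A \<Longrightarrow> (c (m x119 (m x120 x121))) = (m (c (m (m x120 x119) (m x121 x118))) (c (m x119 (m x120 (m x121 (c x118))))))"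
  by (metis idem_f2116 assoc cl)
lemma idem_f2118: "x118 \<in> A \<Longrightarrow> x119 \<in> A \<Longrightarrow> x120 \<in> A \<Longrightarrow> x121 \<in> A \<Longrightarrow> (c (m x119 (m x120 x121))) = (m (c (m x120 (m x119 (m x121 x118)))) (c (m x119 (m x120 (m x121 (c x118))))))"
  by (metis idem_f2117 assoc cl)
lemma idem_f37451: "x37 \<in> A \<Longrightarrow> x38 \<in> A \<Longrightarrow> x39 \<in> A \<Longrightarrow> (c (m (m x37 x38) x39)) = (c (m x38 (m x37 x39)))"
  by (metis idem_f37450 idem_f2118 cl)
lemma idem_f37452: "x37 \<in> A \<Longrightarrow> x38 \<in> A \<Longrightarrow> x39 \<in> A \<Longrightarrow> (c (m x37 (m x38 x39))) = (c (m x38 (m x37 x39)))"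
  by (metis idem_f37451 assoc cl)
lemma idem_f76419: "x189 \<in> A \<Longrightarrow> x190 \<in> A \<Longrightarrow> (m x190 x190) = (m x190 (c (m x189 (m (c x189) x189))))"
  by (metis idem_f75693 idem_f37452 cl)
lemma idem_f37580: "x0 \<in> A \<Longrightarrow> x1 \<in> A \<Longrightarrow> x2 \<in> A \<Longrightarrow> (c (m x2 (m x1 x0))) = (c (m x0 (m x2 x1)))"
  by (metis idem_f37452 comm cl)
lemma idem_f76420: "x189 \<in> A \<Longrightarrow> x190 \<in> A \<Longrightarrow> (m x190 x190) = (m x190 (c (m x189 (m x189 (c x189)))))"
  by (metis idem_f76419 idem_f37580 cl)
lemma idem_f34494: "x2 \<in> A \<Longrightarrow> x3 \<in> A \<Longrightarrow> (m (c x2) (c (m (c x3) (c x2)))) = (m (c (m x2 x3)) (c (c x3)))"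
  by (metis idem_f708 idem_f680 cl)
lemma idem_f34640: "x2 \<in> A \<Longrightarrow> x3 \<in> A \<Longrightarrow> (m (c x2) (c (m (c x3) (c x2)))) = (m (c (m x2 x3)) x3)"
  by (metis idem_f34494 j4 cl)
lemma idem_f75874: "x901 \<in> A \<Longrightarrow> x902 \<in> A \<Longrightarrow> (m (c (m (c x901) x901)) x901) = (m (c (c x901)) (c (m (c x902) (m x902 x902))))"
  by (metis idem_f34640 idem_f73832 cl)
lemma idem_f76749: "x901 \<in> A \<Longrightarrow> x902 \<in> A \<Longrightarrow> (m (c (m (c x901) x901)) x901) = (m (c (c x901)) (c (m x902 (m (c x902) x902))))"
  by (metis idem_f75874 idem_f37452 cl)
lemma idem_f76750: "x901 \<in> A \<Longrightarrow> x902 \<in> A \<Longrightarrow> (m (c (m (c x901) x901)) x901) = (m (c (c x901)) (c (m x902 (m x902 (c x902)))))"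
  by (metis idem_f76749 idem_f37580 cl)
lemma idem_f76751: "x901 \<in> A \<Longrightarrow> x902 \<in> A \<Longrightarrow> (m (c (m (c x901) x901)) x901) = (m x901 (c (m x902 (m x902 (c x902)))))"
  by (metis idem_f76750 j4 cl)
lemma idem_f706: "x4 \<in> A \<Longrightarrow> x5 \<in> A \<Longrightarrow> x6 \<in> A \<Longrightarrow> (m (c (m x4 (c x5))) (m (c (m x4 x5)) x6)) = (m x6 (c x4))"
  by (metis a9 j5 cl)
lemma idem_f37685: "x321 \<in> A \<Longrightarrow> x322 \<in> A \<Longrightarrow> x323 \<in> A \<Longrightarrow> (c (m (c (m x321 x322)) (m (c (m x321 (c x322))) x323))) = (c (m x323 (c x321)))"
  by (metis idem_f37452 idem_f706 cl)
lemma idem_f37898: "x321 \<in> A \<Longrightarrow> x323 \<in> A \<Longrightarrow> (c (m x323 (c x321))) = (c (m (c x321) x323))"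
  by (metis idem_f37685 idem_f708 cl)
lemma idem_f38015: "x0 \<in> A \<Longrightarrow> x1 \<in> A \<Longrightarrow> (c (m x0 x1)) = (c (m x1 x0))"
  by (metis idem_f37898 j4 cl)
lemma idem_f76752: "x901 \<in> A \<Longrightarrow> x902 \<in> A \<Longrightarrow> (m x901 (c (m x902 (m x902 (c x902))))) = (m (c (m x901 (c x901))) x901)"
  by (metis idem_f76751 idem_f38015 cl)
lemma idem_f705: "x19 \<in> A \<Longrightarrow> x20 \<in> A \<Longrightarrow> (c (c (m x19 x20))) = (m (c (m (c (m x19 x20)) (m x19 (c x20)))) (c (c x19)))"
  by (metis j5 j5 cl)
lemma idem_f733: "x19 \<in> A \<Longrightarrow> x20 \<in> A \<Longrightarrow> (c (c (m x19 x20))) = (m (c (m (c (m x19 x20)) (m x19 (c x20)))) x19)"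
  by (metis idem_f705 j4 cl)
lemma idem_f734: "x19 \<in> A \<Longrightarrow> x20 \<in> A \<Longrightarrow> (c (c (m x19 x20))) = (m (c (m (c x20) (m x19 (c (m x19 x20))))) x19)"
  by (metis idem_f733 a9 cl)
lemma idem_f735: "x19 \<in> A \<Longrightarrow> x20 \<in> A \<Longrightarrow> (m x19 x20) = (m (c (m (c x20) (m x19 (c (m x19 x20))))) x19)"
  by (metis idem_f734 j4 cl)
lemma idem_f37070: "x0 \<in> A \<Longrightarrow> x1 \<in> A \<Longrightarrow> (m x0 (c x1)) = (m (c (m (c (c x1)) (m (c (m (c x0) x1)) x1))) x0)"
  by (metis idem_f735 idem_f34646 cl)
lemma idem_f37091: "x0 \<in> A \<Longrightarrow> x1 \<in> A \<Longrightarrow> (m x0 (c x1)) = (m (c (m x1 (m (c (m (c x0) x1)) (c (c x1))))) x0)"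
  by (metis idem_f37070 a9 cl)
lemma idem_f37092: "x0 \<in> A \<Longrightarrow> x1 \<in> A \<Longrightarrow> (m x0 (c x1)) = (m (c (m x1 (m (c (c x1)) (c (m (c x0) x1))))) x0)"
  by (metis idem_f37091 idem_f75 cl)
lemma idem_f37093: "x0 \<in> A \<Longrightarrow> x1 \<in> A \<Longrightarrow> (m x0 (c x1)) = (m (c (m x1 (m x1 (c (m (c x0) x1))))) x0)"
  by (metis idem_f37092 j4 cl)
lemma idem_f73341: "x513 \<in> A \<Longrightarrow> x514 \<in> A \<Longrightarrow> (m x513 (c (c x513))) = (m (c (m x514 (c x514))) x513)"
  by (metis idem_f37093 idem_f60249 cl)
lemma idem_f73633: "x513 \<in> A \<Longrightarrow> x514 \<in> A \<Longrightarrow> (m (c (m x514 (c x514))) x513) = (m x513 x513)"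
  by (metis idem_f73341 j4 cl)
lemma idem_f75212: "x671 \<in> A \<Longrightarrow> x672 \<in> A \<Longrightarrow> (c (c x671)) = (m (c (m (c x671) x671)) (c (m (c (m x672 (c x672))) (c x671))))"
  by (metis j5 idem_f73633 cl)
lemma idem_f75484: "x671 \<in> A \<Longrightarrow> x672 \<in> A \<Longrightarrow> (c (c x671)) = (m (c (m x671 (c x671))) (c (m (c (m x672 (c x672))) (c x671))))"
  by (metis idem_f75212 idem_f38015 cl)
lemma idem_f75485: "x671 \<in> A \<Longrightarrow> x672 \<in> A \<Longrightarrow> (m (c (m x671 (c x671))) (c (m (c (m x672 (c x672))) (c x671)))) = x671"
  by (metis idem_f75484 j4 cl)
lemma idem_f25148: "x15 \<in> A \<Longrightarrow> x16 \<in> A \<Longrightarrow> (m (c (m x16 x15)) (c (c x15))) = (m (c (m (c x15) (c x16))) (c x16))"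
  by (metis idem_f706 idem_f758 cl)
lemma idem_f25277: "x15 \<in> A \<Longrightarrow> x16 \<in> A \<Longrightarrow> (m (c (m (c x15) (c x16))) (c x16)) = (m (c (m x16 x15)) x15)"
  by (metis idem_f25148 j4 cl)
lemma idem_f43885: "x0 \<in> A \<Longrightarrow> x1 \<in> A \<Longrightarrow> (m (c (m (c x1) (c x0))) (c x1)) = (m (c (m x1 x0)) x0)"
  by (metis idem_f25277 comm cl)
lemma idem_f60634: "x1226 \<in> A \<Longrightarrow> x1227 \<in> A \<Longrightarrow> (m (c (m x1226 (c x1226))) (c x1226)) = (m (c (m (c x1227) x1227)) (c x1226))"
  by (metis idem_f43885 idem_f60125 cl)
lemma idem_f61786: "x1226 \<in> A \<Longrightarrow> x1227 \<in> A \<Longrightarrow> (m (c (m x1226 (c x1226))) (c x1226)) = (m (c (m x1227 (c x1227))) (c x1226))"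
  by (metis idem_f60634 idem_f38015 cl)
lemma idem_f34496: "x6 \<in> A \<Longrightarrow> x7 \<in> A \<Longrightarrow> (m (c x6) (c (m (c x6) (c x7)))) = (m (c (m x6 x7)) (c (c x7)))"
  by (metis idem_f708 idem_f759 cl)
lemma idem_f34641: "x6 \<in> A \<Longrightarrow> x7 \<in> A \<Longrightarrow> (m (c (m x6 x7)) x7) = (m (c x6) (c (m (c x6) (c x7))))"
  by (metis idem_f34496 j4 cl)
lemma idem_f60623: "x1204 \<in> A \<Longrightarrow> x1205 \<in> A \<Longrightarrow> (m (c (m x1204 (c x1204))) (c x1204)) = (m (c x1204) (c (m (c x1205) x1205)))"
  by (metis idem_f34641 idem_f60125 cl)
lemma idem_f61765: "x1204 \<in> A \<Longrightarrow> x1205 \<in> A \<Longrightarrow> (m (c (m x1204 (c x1204))) (c x1204)) = (m (c x1204) (c (m x1205 (c x1205))))"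
  by (metis idem_f60623 idem_f38015 cl)
lemma idem_f60303: "x0 \<in> A \<Longrightarrow> x1 \<in> A \<Longrightarrow> (c x0) = (m (c (m x0 x0)) (c (m (c x1) x1)))"
  by (metis j5 idem_f60125 cl)
lemma idem_f61296: "x0 \<in> A \<Longrightarrow> x1 \<in> A \<Longrightarrow> (c x0) = (m (c (m x0 x0)) (c (m x1 (c x1))))"
  by (metis idem_f60303 idem_f38015 cl)
lemma idem_f75895: "x2 \<in> A \<Longrightarrow> x3 \<in> A \<Longrightarrow> (c (m x2 x2)) = (m (c (m x3 (c x3))) (c (m (m x2 x2) x2)))"
  by (metis idem_f758 idem_f73832 cl)
lemma idem_f76812: "x2 \<in> A \<Longrightarrow> x3 \<in> A \<Longrightarrow> (c (m x2 x2)) = (m (c (m x3 (c x3))) (c (m x2 (m x2 x2))))"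
  by (metis idem_f75895 idem_f38015 cl)
lemma idem_f5107: "x0 \<in> A \<Longrightarrow> (m (c x0) (m (c x0) (c (m (c x0) x0)))) = (m (c x0) (c (m (c (m (c x0) (c (m (c x0) x0)))) (m (c x0) x0))))"
  by (metis idem_f727 idem_f727 cl)
lemma idem_f5237: "x0 \<in> A \<Longrightarrow> (m (c x0) (m (c x0) (c (m (c x0) x0)))) = (m (c x0) (c (m (m (c x0) x0) (c (m (c x0) (c (m (c x0) x0)))))))"
  by (metis idem_f5107 comm cl)
lemma idem_f5238: "x0 \<in> A \<Longrightarrow> (m (c x0) (m (c x0) (c (m (c x0) x0)))) = (m (c x0) (c (m (c x0) (m x0 (c (m (c x0) (c (m (c x0) x0))))))))"
  by (metis idem_f5237 assoc cl)
lemma idem_f5239: "x0 \<in> A \<Longrightarrow> (m (c x0) (m (c x0) (c (m (c x0) x0)))) = (m (c x0) (c (m x0 (m (c (m (c x0) (c (m (c x0) x0)))) (c x0)))))"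
  by (metis idem_f5238 idem_f17 cl)
lemma idem_f5240: "x0 \<in> A \<Longrightarrow> (m (c x0) (m (c x0) (c (m (c x0) x0)))) = (m (c x0) (c (m x0 (m (c x0) (c (m (c x0) (c (m (c x0) x0))))))))"
  by (metis idem_f5239 idem_f75 cl)
lemma idem_f5241: "x0 \<in> A \<Longrightarrow> (m (c x0) (m (c x0) (c (m x0 (c x0))))) = (m (c x0) (c (m x0 (m (c x0) (c (m (c x0) (c (m x0 (c x0)))))))))"
  by (metis idem_f5240 comm cl)
lemma idem_f73627: "x0 \<in> A \<Longrightarrow> (m (c x0) (m (c x0) (c x0))) = (m (c x0) (c (m x0 (m (c x0) (c (m (c x0) (c x0)))))))"
  by (metis idem_f5241 idem_f73625 cl)
lemma idem_f757: "x48 \<in> A \<Longrightarrow> x49 \<in> A \<Longrightarrow> (c (c (m x49 (c x48)))) = (m (c (c x49)) (c (m (c (m x49 (c x48))) (c (c (m x48 x49))))))"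
  by (metis idem_f680 idem_f680 cl)
lemma idem_f797: "x48 \<in> A \<Longrightarrow> x49 \<in> A \<Longrightarrow> (c (c (m x49 (c x48)))) = (m (c (c x49)) (c (m (c (c (m x48 x49))) (c (m x49 (c x48))))))"
  by (metis idem_f757 comm cl)
lemma idem_f798: "x48 \<in> A \<Longrightarrow> x49 \<in> A \<Longrightarrow> (c (c (m x49 (c x48)))) = (m (c (c x49)) (c (m (m x48 x49) (c (m x49 (c x48))))))"
  by (metis idem_f797 j4 cl)
lemma idem_f799: "x48 \<in> A \<Longrightarrow> x49 \<in> A \<Longrightarrow> (c (c (m x49 (c x48)))) = (m (c (c x49)) (c (m x48 (m x49 (c (m x49 (c x48)))))))"
  by (metis idem_f798 assoc cl)
lemma idem_f800: "x48 \<in> A \<Longrightarrow> x49 \<in> A \<Longrightarrow> (c (c (m x49 (c x48)))) = (m x49 (c (m x48 (m x49 (c (m x49 (c x48)))))))"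
  by (metis idem_f799 j4 cl)
lemma idem_f801: "x48 \<in> A \<Longrightarrow> x49 \<in> A \<Longrightarrow> (m x49 (c x48)) = (m x49 (c (m x48 (m x49 (c (m x49 (c x48)))))))"
  by (metis idem_f800 j4 cl)
lemma idem_f73631: "x0 \<in> A \<Longrightarrow> (m (c x0) (c x0)) = (m (c x0) (m (c x0) (c x0)))"
  by (metis idem_f73627 idem_f801 cl)
lemma idem_f78267: "x0 \<in> A \<Longrightarrow> (m x0 x0) = (m x0 (m x0 x0))"
  by (metis idem_f73631 j4 cl)
lemma idem_f78346: "x2 \<in> A \<Longrightarrow> x3 \<in> A \<Longrightarrow> (c (m x2 x2)) = (m (c (m x3 (c x3))) (c (m x2 x2)))"
  by (metis idem_f76812 idem_f78267 cl)
lemma idem_f697: "x0 \<in> A \<Longrightarrow> x1 \<in> A \<Longrightarrow> (c x1) = (m (c (m x1 (c x0))) (c (m x1 x0)))"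
  by (metis j5 j4 cl)
lemma idem_f60305: "x4 \<in> A \<Longrightarrow> x5 \<in> A \<Longrightarrow> (c x4) = (m (c (m (c x5) x5)) (c (m x4 x4)))"
  by (metis idem_f697 idem_f60125 cl)
lemma idem_f61298: "x4 \<in> A \<Longrightarrow> x5 \<in> A \<Longrightarrow> (c x4) = (m (c (m x5 (c x5))) (c (m x4 x4)))"
  by (metis idem_f60305 idem_f38015 cl)
lemma idem_f78350: "x2 \<in> A \<Longrightarrow> (c x2) = (c (m x2 x2))"
  by (metis idem_f78346 idem_f61298 cl)
lemma idem_f78353: "x0 \<in> A \<Longrightarrow> x1 \<in> A \<Longrightarrow> (c x0) = (m (c x0) (c (m x1 (c x1))))"
  by (metis idem_f61296 idem_f78350 cl)
lemma idem_f78402: "x1204 \<in> A \<Longrightarrow> (c x1204) = (m (c (m x1204 (c x1204))) (c x1204))"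
  by (metis idem_f61765 idem_f78353 cl)
lemma idem_f78414: "x1226 \<in> A \<Longrightarrow> x1227 \<in> A \<Longrightarrow> (c x1226) = (m (c (m x1227 (c x1227))) (c x1226))"
  by (metis idem_f61786 idem_f78402 cl)
lemma idem_f78415: "x671 \<in> A \<Longrightarrow> (m (c (m x671 (c x671))) (c (c x671))) = x671"
  by (metis idem_f75485 idem_f78414 cl)
lemma idem_f78417: "x671 \<in> A \<Longrightarrow> (m (c (m x671 (c x671))) x671) = x671"
  by (metis idem_f78415 j4 cl)
lemma idem_f78418: "x901 \<in> A \<Longrightarrow> x902 \<in> A \<Longrightarrow> (m x901 (c (m x902 (m x902 (c x902))))) = x901"
  by (metis idem_f76752 idem_f78417 cl)
lemma idem_f78422: "x190 \<in> A \<Longrightarrow> (m x190 x190) = x190"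
  by (metis idem_f76420 idem_f78418 cl)
lemma idem: "x \<in> A \<Longrightarrow> (m x x) = x"
  by (metis idem_f78422 cl)

lemma botc_f708: "x10 \<in> A \<Longrightarrow> x11 \<in> A \<Longrightarrow> x12 \<in> A \<Longrightarrow> (m (c (m x10 x11)) (m (c (m x10 (c x11))) x12)) = (m (c x10) x12)"
  by (metis assoc j5 cl)
lemma botc_f680: "x0 \<in> A \<Longrightarrow> x1 \<in> A \<Longrightarrow> (c x0) = (m (c (m x1 x0)) (c (m x0 (c x1))))"
  by (metis j5 comm cl)
lemma botc_f758: "x0 \<in> A \<Longrightarrow> x1 \<in> A \<Longrightarrow> (c x1) = (m (c (m (c x0) x1)) (c (m x1 x0)))"
  by (metis botc_f680 j4 cl)
lemma botc_f36380: "x12 \<in> A \<Longrightarrow> x13 \<in> A \<Longrightarrow> (m (c (c x12)) (c (m (c x13) x12))) = (m (c (m (c x12) x13)) (c (c x13)))"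
  by (metis botc_f708 botc_f758 cl)
lemma botc_f36523: "x12 \<in> A \<Longrightarrow> x13 \<in> A \<Longrightarrow> (m (c (c x12)) (c (m (c x13) x12))) = (m (c (m (c x12) x13)) x13)"
  by (metis botc_f36380 j4 cl)
lemma botc_f36524: "x12 \<in> A \<Longrightarrow> x13 \<in> A \<Longrightarrow> (m (c (m (c x12) x13)) x13) = (m x12 (c (m (c x13) x12)))"
  by (metis botc_f36523 j4 cl)
lemma botc_f36648: "x0 \<in> A \<Longrightarrow> x1 \<in> A \<Longrightarrow> (m x0 (c (m (c x1) x0))) = (m (c (m x1 (c x0))) x1)"
  by (metis botc_f36524 comm cl)
lemma botc_f39025: "x11 \<in> A \<Longrightarrow> x12 \<in> A \<Longrightarrow> (m (c x11) x11) = (m (c (m x11 x12)) (m x12 (c (m (c x11) x12))))"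
  by (metis botc_f708 botc_f36648 cl)
lemma botc_f39071: "x11 \<in> A \<Longrightarrow> x12 \<in> A \<Longrightarrow> (m (c (m x11 x12)) (m x12 (c (m (c x11) x12)))) = (m x11 (c x11))"
  by (metis botc_f39025 comm cl)
lemma botc_f17: "x0 \<in> A \<Longrightarrow> x1 \<in> A \<Longrightarrow> x2 \<in> A \<Longrightarrow> (m x2 (m x1 x0)) = (m x1 (m x0 x2))"
  by (metis a9 comm cl)
lemma botc_f62: "x6 \<in> A \<Longrightarrow> x7 \<in> A \<Longrightarrow> x8 \<in> A \<Longrightarrow> (m x8 (m x7 x6)) = (m x7 (m x8 x6))"
  by (metis botc_f17 a9 cl)
lemma botc_f759: "x0 \<in> A \<Longrightarrow> x1 \<in> A \<Longrightarrow> (c x0) = (m (c (m x1 x0)) (c (m (c x1) x0)))"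
  by (metis botc_f680 comm cl)
lemma botc_f1253: "x36 \<in> A \<Longrightarrow> x37 \<in> A \<Longrightarrow> x38 \<in> A \<Longrightarrow> (m x38 (c x37)) = (m (c (m x36 x37)) (m x38 (c (m (c x36) x37))))"
  by (metis botc_f62 botc_f759 cl)
lemma botc_f72473: "x6 \<in> A \<Longrightarrow> x7 \<in> A \<Longrightarrow> (m x7 (c x7)) = (m x6 (c x6))"
  by (metis botc_f39071 botc_f1253 cl)
lemma botc: "x \<in> A \<Longrightarrow> y \<in> A \<Longrightarrow> (m x (c x)) = (m y (c y))"
  by (metis botc_f72473 cl)

lemma bota_f19: "x0 \<in> A \<Longrightarrow> x1 \<in> A \<Longrightarrow> (m x1 (c x1)) = (m (c x0) x0)"
  by (metis botc j4 cl)
lemma bota_f63: "x0 \<in> A \<Longrightarrow> x1 \<in> A \<Longrightarrow> (m x1 x0) = (m x0 (m x0 x1))"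
  by (metis a9 idem cl)
lemma bota: "x \<in> A \<Longrightarrow> y \<in> A \<Longrightarrow> (m x (m y (c y))) = (m y (c y))"
  by (metis bota_f19 bota_f63 botc cl)

lemma mnc_f774: "x1 \<in> A \<Longrightarrow> x2 \<in> A \<Longrightarrow> (c x1) = (m (c (m x2 x1)) (c (m x1 (c x2))))"
  by (metis j5 comm cl)
lemma mnc_f4513: "x90 \<in> A \<Longrightarrow> x91 \<in> A \<Longrightarrow> (c (c (m x90 (c x91)))) = (m (c (c x90)) (c (m (c (m x90 (c x91))) (c (c (m x90 x91))))))"
  by (metis mnc_f774 j5 cl)
lemma mnc_f4671: "x90 \<in> A \<Longrightarrow> x91 \<in> A \<Longrightarrow> (c (c (m x90 (c x91)))) = (m (c (c x90)) (c (m (c (m x90 (c x91))) (m x90 x91))))"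
  by (metis mnc_f4513 j4 cl)
lemma mnc_f4672: "x90 \<in> A \<Longrightarrow> x91 \<in> A \<Longrightarrow> (c (c (m x90 (c x91)))) = (m (c (c x90)) (c (m (m x90 x91) (c (m x90 (c x91))))))"
  by (metis mnc_f4671 comm cl)
lemma mnc_f4673: "x90 \<in> A \<Longrightarrow> x91 \<in> A \<Longrightarrow> (c (c (m x90 (c x91)))) = (m (c (c x90)) (c (m x90 (m x91 (c (m x90 (c x91)))))))"
  by (metis mnc_f4672 assoc cl)
lemma mnc_f163: "x0 \<in> A \<Longrightarrow> x1 \<in> A \<Longrightarrow> (m x0 x1) = (m x0 (m x0 x1))"
  by (metis assoc idem cl)
lemma mnc_f820: "x23 \<in> A \<Longrightarrow> x24 \<in> A \<Longrightarrow> (c x23) = (m (c (m x23 x24)) (c x23))"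
  by (metis mnc_f163 j5 cl)
lemma mnc_f1040: "x0 \<in> A \<Longrightarrow> x1 \<in> A \<Longrightarrow> (m (c (m (c x0) x1)) x0) = x0"
  by (metis mnc_f820 j4 cl)
lemma mnc_f1088: "x15 \<in> A \<Longrightarrow> x16 \<in> A \<Longrightarrow> (m (c (m x16 (c x15))) x15) = x15"
  by (metis mnc_f1040 comm cl)
lemma mnc_f1172: "x5 \<in> A \<Longrightarrow> x6 \<in> A \<Longrightarrow> (m x6 (c (m x5 (c x6)))) = x6"
  by (metis mnc_f1088 comm cl)
lemma mnc_f4674: "x90 \<in> A \<Longrightarrow> x91 \<in> A \<Longrightarrow> (c (c (m x90 (c x91)))) = (m (c (c x90)) (c (m x90 x91)))"
  by (metis mnc_f4673 mnc_f1172 cl)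
lemma mnc_f4675: "x90 \<in> A \<Longrightarrow> x91 \<in> A \<Longrightarrow> (c (c (m x90 (c x91)))) = (m x90 (c (m x90 x91)))"
  by (metis mnc_f4674 j4 cl)
lemma mnc_f4676: "x90 \<in> A \<Longrightarrow> x91 \<in> A \<Longrightarrow> (m x90 (c x91)) = (m x90 (c (m x90 x91)))"
  by (metis mnc_f4675 j4 cl)
lemma mnc: "x \<in> A \<Longrightarrow> y \<in> A \<Longrightarrow> (m x (c (m x y))) = (m x (c y))"
  by (metis mnc_f4676 cl)

lemma jbot: "x \<in> A \<Longrightarrow> y \<in> A \<Longrightarrow> (c (m (c x) (c (m y (c y))))) = x"
  by (metis botc idem j4 mnc cl)

lemma dist_f239: "x27 \<in> A \<Longrightarrow> x28 \<in> A \<Longrightarrow> x29 \<in> A \<Longrightarrow> (c (m x27 x28)) = (m (c (m x27 (m x28 x29))) (c (m (m x27 x28) (c x29))))"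
  by (metis j5 assoc cl)
lemma dist_f277: "x27 \<in> A \<Longrightarrow> x28 \<in> A \<Longrightarrow> x29 \<in> A \<Longrightarrow> (c (m x27 x28)) = (m (c (m x27 (m x28 x29))) (c (m x27 (m x28 (c x29)))))"
  by (metis dist_f239 assoc cl)
lemma dist_f227: "x1 \<in> A \<Longrightarrow> x2 \<in> A \<Longrightarrow> (c x1) = (m (c (m x2 x1)) (c (m x1 (c x2))))"
  by (metis j5 comm cl)
lemma dist_f33: "x1 \<in> A \<Longrightarrow> x2 \<in> A \<Longrightarrow> (m x1 (c x2)) = (m x1 (c (m x2 x1)))"
  by (metis mnc comm cl)
lemma dist_f1663: "x39 \<in> A \<Longrightarrow> x40 \<in> A \<Longrightarrow> (c (c (m x40 x39))) = (m (c (m x39 (c x40))) (c (m (c (m x40 x39)) (c x39))))"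
  by (metis dist_f227 dist_f33 cl)
lemma dist_f1745: "x39 \<in> A \<Longrightarrow> x40 \<in> A \<Longrightarrow> (c (c (m x40 x39))) = (m (c (m x39 (c x40))) (c (m (c x39) (c (m x40 x39)))))"
  by (metis dist_f1663 comm cl)
lemma dist_f1746: "x39 \<in> A \<Longrightarrow> x40 \<in> A \<Longrightarrow> (m x40 x39) = (m (c (m x39 (c x40))) (c (m (c x39) (c (m x40 x39)))))"
  by (metis dist_f1745 j4 cl)
lemma dist_f76: "x0 \<in> A \<Longrightarrow> x1 \<in> A \<Longrightarrow> (m x1 x0) = (m x0 (m x0 x1))"
  by (metis a9 idem cl)
lemma dist_f1714: "x30 \<in> A \<Longrightarrow> x31 \<in> A \<Longrightarrow> (m (c (m x31 (c x30))) (c (m x30 x31))) = (m (c (m x30 x31)) (c x31))"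
  by (metis dist_f76 dist_f227 cl)
lemma dist_f1838: "x30 \<in> A \<Longrightarrow> x31 \<in> A \<Longrightarrow> (m (c (m x31 (c x30))) (c (m x30 x31))) = (m (c x31) (c (m x30 x31)))"
  by (metis dist_f1714 comm cl)
lemma dist_f431: "x10 \<in> A \<Longrightarrow> x11 \<in> A \<Longrightarrow> (c x10) = (m (c (m x10 (c x11))) (c (m x10 (c (c (m x11 x10))))))"
  by (metis j5 dist_f33 cl)
lemma dist_f468: "x10 \<in> A \<Longrightarrow> x11 \<in> A \<Longrightarrow> (c x10) = (m (c (m x10 (c x11))) (c (m x10 (m x11 x10))))"
  by (metis dist_f431 j4 cl)
lemma dist_f88: "x8 \<in> A \<Longrightarrow> x9 \<in> A \<Longrightarrow> (m x8 x9) = (m x9 (m x8 (m x8 x9)))"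
  by (metis a9 idem cl)
lemma dist_f37: "x10 \<in> A \<Longrightarrow> x9 \<in> A \<Longrightarrow> (m x9 (c (c (m x9 x10)))) = (m x9 (c (m x9 (c x10))))"
  by (metis mnc mnc cl)
lemma dist_f43: "x10 \<in> A \<Longrightarrow> x9 \<in> A \<Longrightarrow> (m x9 (c (c (m x9 x10)))) = (m x9 (c (c x10)))"
  by (metis dist_f37 mnc cl)
lemma dist_f44: "x10 \<in> A \<Longrightarrow> x9 \<in> A \<Longrightarrow> (m x9 x10) = (m x9 (c (c (m x9 x10))))"
  by (metis dist_f43 j4 cl)
lemma dist_f45: "x10 \<in> A \<Longrightarrow> x9 \<in> A \<Longrightarrow> (m x9 x10) = (m x9 (m x9 x10))"
  by (metis dist_f44 j4 cl)
lemma dist_f122: "x8 \<in> A \<Longrightarrow> x9 \<in> A \<Longrightarrow> (m x8 x9) = (m x9 (m x8 x9))"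
  by (metis dist_f88 dist_f45 cl)
lemma dist_f469: "x10 \<in> A \<Longrightarrow> x11 \<in> A \<Longrightarrow> (c x10) = (m (c (m x10 (c x11))) (c (m x11 x10)))"
  by (metis dist_f468 dist_f122 cl)
lemma dist_f1839: "x30 \<in> A \<Longrightarrow> x31 \<in> A \<Longrightarrow> (c x31) = (m (c x31) (c (m x30 x31)))"
  by (metis dist_f1838 dist_f469 cl)
lemma dist_f1840: "x39 \<in> A \<Longrightarrow> x40 \<in> A \<Longrightarrow> (m x40 x39) = (m (c (m x39 (c x40))) (c (c x39)))"
  by (metis dist_f1746 dist_f1839 cl)
lemma dist_f1841: "x39 \<in> A \<Longrightarrow> x40 \<in> A \<Longrightarrow> (m x40 x39) = (m (c (m x39 (c x40))) x39)"
  by (metis dist_f1840 j4 cl)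
lemma dist_f16858: "x255 \<in> A \<Longrightarrow> x256 \<in> A \<Longrightarrow> x257 \<in> A \<Longrightarrow> (c (m (c (m (m x255 (c x256)) (c x257))) x255)) = (m (c (m (c (m (m x255 (c x256)) (c x257))) (m x255 x256))) (c (m x257 (m x255 (c x256)))))"
  by (metis dist_f277 dist_f1841 cl)
lemma dist_f1689: "x21 \<in> A \<Longrightarrow> x22 \<in> A \<Longrightarrow> (c (c (m x21 x22))) = (m (c (m (m x22 (c x21)) (c (m x21 x22)))) (c (c x22)))"
  by (metis dist_f227 dist_f227 cl)
lemma dist_f1796: "x21 \<in> A \<Longrightarrow> x22 \<in> A \<Longrightarrow> (c (c (m x21 x22))) = (m (c (m (m x22 (c x21)) (c (m x21 x22)))) x22)"
  by (metis dist_f1689 j4 cl)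
lemma dist_f1797: "x21 \<in> A \<Longrightarrow> x22 \<in> A \<Longrightarrow> (c (c (m x21 x22))) = (m (c (m (c (m x21 x22)) (m x22 (c x21)))) x22)"
  by (metis dist_f1796 comm cl)
lemma dist_f1798: "x21 \<in> A \<Longrightarrow> x22 \<in> A \<Longrightarrow> (c (c (m x21 x22))) = (m (c (m (c x21) (m x22 (c (m x21 x22))))) x22)"
  by (metis dist_f1797 a9 cl)
lemma dist_f1799: "x21 \<in> A \<Longrightarrow> x22 \<in> A \<Longrightarrow> (c (c (m x21 x22))) = (m (c (m (c x21) (m x22 (c x21)))) x22)"
  by (metis dist_f1798 dist_f33 cl)
lemma dist_f1800: "x21 \<in> A \<Longrightarrow> x22 \<in> A \<Longrightarrow> (c (c (m x21 x22))) = (m (c (m x22 (c x21))) x22)"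
  by (metis dist_f1799 dist_f122 cl)
lemma dist_f249: "x15 \<in> A \<Longrightarrow> x16 \<in> A \<Longrightarrow> (c (c (m x15 x16))) = (m (c (m (c (m x15 x16)) (m x15 (c x16)))) (c (c x15)))"
  by (metis j5 j5 cl)
lemma dist_f286: "x15 \<in> A \<Longrightarrow> x16 \<in> A \<Longrightarrow> (c (c (m x15 x16))) = (m (c (m (c (m x15 x16)) (m x15 (c x16)))) x15)"
  by (metis dist_f249 j4 cl)
lemma dist_f287: "x15 \<in> A \<Longrightarrow> x16 \<in> A \<Longrightarrow> (c (c (m x15 x16))) = (m (c (m (c x16) (m x15 (c (m x15 x16))))) x15)"
  by (metis dist_f286 a9 cl)
lemma dist_f288: "x15 \<in> A \<Longrightarrow> x16 \<in> A \<Longrightarrow> (c (c (m x15 x16))) = (m (c (m (c x16) (m x15 (c x16)))) x15)"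
  by (metis dist_f287 mnc cl)
lemma dist_f289: "x15 \<in> A \<Longrightarrow> x16 \<in> A \<Longrightarrow> (c (c (m x15 x16))) = (m (c (m x15 (c x16))) x15)"
  by (metis dist_f288 dist_f122 cl)
lemma dist_f290: "x15 \<in> A \<Longrightarrow> x16 \<in> A \<Longrightarrow> (m x15 x16) = (m (c (m x15 (c x16))) x15)"
  by (metis dist_f289 j4 cl)
lemma dist_f1801: "x21 \<in> A \<Longrightarrow> x22 \<in> A \<Longrightarrow> (m x22 x21) = (c (c (m x21 x22)))"
  by (metis dist_f1800 dist_f290 cl)
lemma dist_f1881: "x2 \<in> A \<Longrightarrow> x3 \<in> A \<Longrightarrow> (c (m x2 x3)) = (c (m x3 x2))"
  by (metis j4 dist_f1801 cl)
lemma dist_f17137: "x255 \<in> A \<Longrightarrow> x256 \<in> A \<Longrightarrow> x257 \<in> A \<Longrightarrow> (c (m (c (m (m x255 (c x256)) (c x257))) x255)) = (m (c (m (m x255 x256) (c (m (m x255 (c x256)) (c x257))))) (c (m x257 (m x255 (c x256)))))"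
  by (metis dist_f16858 dist_f1881 cl)
lemma dist_f17138: "x255 \<in> A \<Longrightarrow> x256 \<in> A \<Longrightarrow> x257 \<in> A \<Longrightarrow> (c (m (c (m (m x255 (c x256)) (c x257))) x255)) = (m (c (m x255 (m x256 (c (m (m x255 (c x256)) (c x257)))))) (c (m x257 (m x255 (c x256)))))"
  by (metis dist_f17137 assoc cl)
lemma dist_f17139: "x255 \<in> A \<Longrightarrow> x256 \<in> A \<Longrightarrow> x257 \<in> A \<Longrightarrow> (c (m (c (m x255 (m (c x256) (c x257)))) x255)) = (m (c (m x255 (m x256 (c (m x255 (m (c x256) (c x257))))))) (c (m x257 (m x255 (c x256)))))"
  by (metis dist_f17138 assoc cl)
lemma dist_f427: "x10 \<in> A \<Longrightarrow> x8 \<in> A \<Longrightarrow> x9 \<in> A \<Longrightarrow> (m x8 (m x9 (c (m x10 (m x8 x9))))) = (m (m x8 x9) (c x10))"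
  by (metis dist_f33 assoc cl)
lemma dist_f462: "x10 \<in> A \<Longrightarrow> x8 \<in> A \<Longrightarrow> x9 \<in> A \<Longrightarrow> (m x8 (m x9 (c (m x10 (m x8 x9))))) = (m x8 (m x9 (c x10)))"
  by (metis dist_f427 assoc cl)
lemma dist_f110: "x4 \<in> A \<Longrightarrow> x5 \<in> A \<Longrightarrow> x6 \<in> A \<Longrightarrow> (m x4 (c (m x5 x6))) = (m x4 (c (m x6 (m x5 x4))))"
  by (metis mnc a9 cl)
lemma dist_f463: "x10 \<in> A \<Longrightarrow> x8 \<in> A \<Longrightarrow> x9 \<in> A \<Longrightarrow> (m x8 (m x9 (c x10))) = (m x8 (m x9 (c (m x8 x10))))"
  by (metis dist_f462 dist_f110 cl)
lemma dist_f17140: "x255 \<in> A \<Longrightarrow> x256 \<in> A \<Longrightarrow> x257 \<in> A \<Longrightarrow> (c (m (c (m x255 (m (c x256) (c x257)))) x255)) = (m (c (m x255 (m x256 (c (m (c x256) (c x257)))))) (c (m x257 (m x255 (c x256)))))"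
  by (metis dist_f17139 dist_f463 cl)
lemma dist_f27: "x0 \<in> A \<Longrightarrow> x1 \<in> A \<Longrightarrow> (m x1 (c x1)) = (m (c x0) x0)"
  by (metis botc j4 cl)
lemma dist_f54: "x0 \<in> A \<Longrightarrow> x1 \<in> A \<Longrightarrow> (m (c x1) x1) = (m (c x0) x0)"
  by (metis dist_f27 j4 cl)
lemma dist_f4052: "x69 \<in> A \<Longrightarrow> x70 \<in> A \<Longrightarrow> x71 \<in> A \<Longrightarrow> (m x69 (c (m (c x69) x71))) = (m x69 (c (m x71 (m (c x70) x70))))"
  by (metis dist_f110 dist_f54 cl)
lemma dist_f77: "x2 \<in> A \<Longrightarrow> x3 \<in> A \<Longrightarrow> x4 \<in> A \<Longrightarrow> (m x3 (m x2 x4)) = (m x4 (m x3 x2))"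
  by (metis a9 comm cl)
lemma dist_f738: "x10 \<in> A \<Longrightarrow> x8 \<in> A \<Longrightarrow> x9 \<in> A \<Longrightarrow> (m x10 (m x8 x9)) = (m x10 (m x9 x8))"
  by (metis dist_f77 a9 cl)
lemma dist_f4169: "x69 \<in> A \<Longrightarrow> x70 \<in> A \<Longrightarrow> x71 \<in> A \<Longrightarrow> (m x69 (c (m (c x69) x71))) = (m x69 (c (m x71 (m x70 (c x70)))))"
  by (metis dist_f4052 dist_f738 cl)
lemma dist_f4170: "x69 \<in> A \<Longrightarrow> x70 \<in> A \<Longrightarrow> x71 \<in> A \<Longrightarrow> (m x69 (c (m (c x69) x71))) = (m x69 (c (m x70 (c x70))))"
  by (metis dist_f4169 bota cl)
lemma dist_f35: "x5 \<in> A \<Longrightarrow> x6 \<in> A \<Longrightarrow> (m x5 (c (c x5))) = (m x5 (c (m x6 (c x6))))"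
  by (metis mnc botc cl)
lemma dist_f38: "x5 \<in> A \<Longrightarrow> x6 \<in> A \<Longrightarrow> (m x5 (c (m x6 (c x6)))) = (m x5 x5)"
  by (metis dist_f35 j4 cl)
lemma dist_f39: "x5 \<in> A \<Longrightarrow> x6 \<in> A \<Longrightarrow> (m x5 (c (m x6 (c x6)))) = x5"
  by (metis dist_f38 idem cl)
lemma dist_f4171: "x69 \<in> A \<Longrightarrow> x71 \<in> A \<Longrightarrow> (m x69 (c (m (c x69) x71))) = x69"
  by (metis dist_f4170 dist_f39 cl)
lemma dist_f17141: "x255 \<in> A \<Longrightarrow> x256 \<in> A \<Longrightarrow> x257 \<in> A \<Longrightarrow> (c (m (c (m x255 (m (c x256) (c x257)))) x255)) = (m (c (m x255 x256)) (c (m x257 (m x255 (c x256)))))"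
  by (metis dist_f17140 dist_f4171 cl)
lemma dist_f85: "x28 \<in> A \<Longrightarrow> x29 \<in> A \<Longrightarrow> x30 \<in> A \<Longrightarrow> (m (c (m x28 x29)) (m x28 x30)) = (m x30 (m x28 (c x29)))"
  by (metis a9 mnc cl)
lemma dist_f3656: "x48 \<in> A \<Longrightarrow> x49 \<in> A \<Longrightarrow> x50 \<in> A \<Longrightarrow> (m (c (m x48 x49)) (c (m x48 x50))) = (m (c (m x48 x49)) (c (m x50 (m x48 (c x49)))))"
  by (metis mnc dist_f85 cl)
lemma dist_f17142: "x255 \<in> A \<Longrightarrow> x256 \<in> A \<Longrightarrow> x257 \<in> A \<Longrightarrow> (c (m (c (m x255 (m (c x256) (c x257)))) x255)) = (m (c (m x255 x256)) (c (m x255 x257)))"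
  by (metis dist_f17141 dist_f3656 cl)
lemma dist_f17143: "x255 \<in> A \<Longrightarrow> x256 \<in> A \<Longrightarrow> x257 \<in> A \<Longrightarrow> (m (c (m x255 x256)) (c (m x255 x257))) = (c (m x255 (c (m x255 (m (c x256) (c x257))))))"
  by (metis dist_f17142 comm cl)
lemma dist_f17144: "x255 \<in> A \<Longrightarrow> x256 \<in> A \<Longrightarrow> x257 \<in> A \<Longrightarrow> (m (c (m x255 x256)) (c (m x255 x257))) = (c (m x255 (c (m (c x256) (c x257)))))"
  by (metis dist_f17143 mnc cl)
lemma dist: "x \<in> A \<Longrightarrow> y \<in> A \<Longrightarrow> z \<in> A \<Longrightarrow> (m x (c (m (c y) (c z)))) = (c (m (c (m x y)) (c (m x z))))"
  by (metis dist_f17144 j4 cl)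

lemma l4_f499: "x2 \<in> A \<Longrightarrow> x3 \<in> A \<Longrightarrow> x4 \<in> A \<Longrightarrow> (m x2 (c (m (c x3) (c x4)))) = (c (m (c (m x3 x2)) (c (m x2 x4))))"
  by (metis dist comm cl)
lemma l4_f374: "x33 \<in> A \<Longrightarrow> x34 \<in> A \<Longrightarrow> (c (c (m x33 x34))) = (m (c (c x33)) (c (m (c (m x33 x34)) (c (c (m x33 (c x34)))))))"
  by (metis j5 j5 cl)
lemma l4_f416: "x33 \<in> A \<Longrightarrow> x34 \<in> A \<Longrightarrow> (c (c (m x33 x34))) = (m (c (c x33)) (c (m (c (m x33 x34)) (m x33 (c x34)))))"
  by (metis l4_f374 j4 cl)
lemma l4_f417: "x33 \<in> A \<Longrightarrow> x34 \<in> A \<Longrightarrow> (c (c (m x33 x34))) = (m (c (c x33)) (c (m (c x34) (m x33 (c (m x33 x34))))))"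
  by (metis l4_f416 a9 cl)
lemma l4_f418: "x33 \<in> A \<Longrightarrow> x34 \<in> A \<Longrightarrow> (c (c (m x33 x34))) = (m (c (c x33)) (c (m (c x34) (m x33 (c x34)))))"
  by (metis l4_f417 mnc cl)
lemma l4_f50: "x0 \<in> A \<Longrightarrow> x1 \<in> A \<Longrightarrow> (m x1 x0) = (m x0 (m x0 x1))"
  by (metis a9 idem cl)
lemma l4_f95: "x1 \<in> A \<Longrightarrow> x2 \<in> A \<Longrightarrow> (m x2 x1) = (m x1 (m x2 x1))"
  by (metis l4_f50 comm cl)
lemma l4_f419: "x33 \<in> A \<Longrightarrow> x34 \<in> A \<Longrightarrow> (c (c (m x33 x34))) = (m (c (c x33)) (c (m x33 (c x34))))"
  by (metis l4_f418 l4_f95 cl)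
lemma l4_f420: "x33 \<in> A \<Longrightarrow> x34 \<in> A \<Longrightarrow> (c (c (m x33 x34))) = (m x33 (c (m x33 (c x34))))"
  by (metis l4_f419 j4 cl)
lemma l4_f421: "x33 \<in> A \<Longrightarrow> x34 \<in> A \<Longrightarrow> (m x33 x34) = (m x33 (c (m x33 (c x34))))"
  by (metis l4_f420 j4 cl)
lemma l4_f18998: "x111 \<in> A \<Longrightarrow> x112 \<in> A \<Longrightarrow> x113 \<in> A \<Longrightarrow> (m (c (m x111 (c x112))) (c (m (c x111) (c x113)))) = (c (m (c (m x111 x112)) (c (m (c (m x111 (c x112))) x113))))"
  by (metis l4_f499 l4_f421 cl)
lemma l4_f281: "x5 \<in> A \<Longrightarrow> x6 \<in> A \<Longrightarrow> x7 \<in> A \<Longrightarrow> (m x5 (c (m x6 x7))) = (m x5 (c (m x7 (m x6 x5))))"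
  by (metis mnc a9 cl)
lemma l4_f376: "x0 \<in> A \<Longrightarrow> x1 \<in> A \<Longrightarrow> (c x1) = (m (c (m x1 (c x0))) (c (m x1 x0)))"
  by (metis j5 j4 cl)
lemma l4_f8128: "x137 \<in> A \<Longrightarrow> x138 \<in> A \<Longrightarrow> x139 \<in> A \<Longrightarrow> (m (c (m x137 x138)) (c (m (c (m x137 (c x138))) x139))) = (m (c (m x137 x138)) (c (m x139 (c x137))))"
  by (metis l4_f281 l4_f376 cl)
lemma l4_f19339: "x111 \<in> A \<Longrightarrow> x112 \<in> A \<Longrightarrow> x113 \<in> A \<Longrightarrow> (m (c (m x111 (c x112))) (c (m (c x111) (c x113)))) = (c (m (c (m x111 x112)) (c (m x113 (c x111)))))"
  by (metis l4_f18998 l4_f8128 cl)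
lemma l4: "s0 \<in> A \<Longrightarrow> s1 \<in> A \<Longrightarrow> x \<in> A \<Longrightarrow> (c (c (m (c (m x s1)) (c (m (c x) s0))))) = (c (m (c (m x (c s1))) (c (m (c x) (c s0)))))"
  by (metis comm j4 l4_f19339 cl)

lemma l5a: "(m (c (m a0 (c a0))) (c (m a0 (c a0)))) = (c (m a0 (c a0)))"
  by (metis idem cl)

lemma l5b: "(m (c (m a0 (c a0))) (c (c (m a0 (c a0))))) = (c (c (m a0 (c a0))))"
  by (metis bota j4 cl)

lemma l5c: "(m (c (c (m a0 (c a0)))) (c (m a0 (c a0)))) = (c (c (m a0 (c a0))))"
  by (metis botc j4 cl)

lemma l5d: "(m (c (c (m a0 (c a0)))) (c (c (m a0 (c a0))))) = (c (c (m a0 (c a0))))"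
  by (metis idem cl)

lemma l2: "x \<in> A \<Longrightarrow> (c (m (c (m x (c (m a0 (c a0))))) (c (m (c x) (c (c (m a0 (c a0)))))))) = x"
  by (metis bota botc comm j4 j5 mnc cl)

lemma l1_f500: "x1 \<in> A \<Longrightarrow> x2 \<in> A \<Longrightarrow> (c x1) = (m (c (m x2 x1)) (c (m x1 (c x2))))"
  by (metis j5 comm cl)
lemma l1: "a \<in> A \<Longrightarrow> x \<in> A \<Longrightarrow> (c (m (c (m x a)) (c (m (c x) a)))) = a"
  by (metis comm j4 l1_f500 cl)

lemma jcomm: "x \<in> A \<Longrightarrow> y \<in> A \<Longrightarrow> (c (m (c x) (c y))) = (c (m (c y) (c x)))"
  by (metis comm cl)

lemma dist2: "x \<in> A \<Longrightarrow> y \<in> A \<Longrightarrow> z \<in> A \<Longrightarrow> (m (c (m (c y) (c z))) x) = (c (m (c (m y x)) (c (m z x))))"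
  by (metis comm dist cl)

lemma xbot1_f220: "x2 \<in> A \<Longrightarrow> x3 \<in> A \<Longrightarrow> (m x3 (c x3)) = (m (c x3) (m x3 x2))"
  by (metis bota a9 cl)
lemma xbot1_f76: "x2 \<in> A \<Longrightarrow> x3 \<in> A \<Longrightarrow> x4 \<in> A \<Longrightarrow> (m x3 (m x2 x4)) = (m x4 (m x3 x2))"
  by (metis a9 comm cl)
lemma xbot1_f85: "x10 \<in> A \<Longrightarrow> x8 \<in> A \<Longrightarrow> x9 \<in> A \<Longrightarrow> (m x10 (m x9 x8)) = (m (m x9 x10) x8)"
  by (metis a9 comm cl)
lemma xbot1: "s \<in> A \<Longrightarrow> u \<in> A \<Longrightarrow> x \<in> A \<Longrightarrow> y \<in> A \<Longrightarrow> (m (m (c x) s) (m x u)) = (m y (c y))"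
  by (metis botc comm xbot1_f220 xbot1_f76 xbot1_f85 cl)

lemma xbot2_f223: "x2 \<in> A \<Longrightarrow> x3 \<in> A \<Longrightarrow> (m x3 (c x3)) = (m (c x3) (m x3 x2))"
  by (metis bota a9 cl)
lemma xbot2_f79: "x2 \<in> A \<Longrightarrow> x3 \<in> A \<Longrightarrow> x4 \<in> A \<Longrightarrow> (m x3 (m x2 x4)) = (m x4 (m x3 x2))"
  by (metis a9 comm cl)
lemma xbot2: "s \<in> A \<Longrightarrow> u \<in> A \<Longrightarrow> x \<in> A \<Longrightarrow> y \<in> A \<Longrightarrow> (m (m x s) (m (c x) u)) = (m y (c y))"
  by (metis a9 botc comm xbot2_f223 xbot2_f79 cl)

lemma pr_f143: "x0 \<in> A \<Longrightarrow> x1 \<in> A \<Longrightarrow> (m x0 x1) = (m x0 (m x0 x1))"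
  by (metis assoc idem cl)
lemma pr_f81: "x2 \<in> A \<Longrightarrow> x3 \<in> A \<Longrightarrow> x4 \<in> A \<Longrightarrow> (m x3 (m x2 x4)) = (m x4 (m x3 x2))"
  by (metis a9 comm cl)
lemma pr: "s \<in> A \<Longrightarrow> u \<in> A \<Longrightarrow> x \<in> A \<Longrightarrow> (m (m x s) (m x u)) = (m x (m s u))"
  by (metis assoc comm pr_f143 pr_f81 cl)

lemma jbot2: "x \<in> A \<Longrightarrow> y \<in> A \<Longrightarrow> (c (m (c (m y (c y))) (c x))) = x"
  by (metis botc comm jbot cl)

lemma l3a_f1806: "x2 \<in> A \<Longrightarrow> x3 \<in> A \<Longrightarrow> x4 \<in> A \<Longrightarrow> (m x2 (c (m (c x3) (c x4)))) = (c (m (c (m x3 x2)) (c (m x2 x4))))"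
  by (metis dist comm cl)
lemma l3a_f31: "x0 \<in> A \<Longrightarrow> x1 \<in> A \<Longrightarrow> x2 \<in> A \<Longrightarrow> (m x0 (m x1 x2)) = (m (m x0 x1) (m x0 x2))"
  by (metis pr cl)
lemma l3a_f29: "x0 \<in> A \<Longrightarrow> x1 \<in> A \<Longrightarrow> x2 \<in> A \<Longrightarrow> x3 \<in> A \<Longrightarrow> (m x1 (c x1)) = (m (m (c x0) x2) (m x0 x3))"
  by (metis xbot1 cl)
lemma l3a_f1589: "x33 \<in> A \<Longrightarrow> x34 \<in> A \<Longrightarrow> x35 \<in> A \<Longrightarrow> x36 \<in> A \<Longrightarrow> x37 \<in> A \<Longrightarrow> (m x33 (m x37 (c x33))) = (m (m x33 x37) (m (m (c x34) x35) (m x34 x36)))"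
  by (metis l3a_f31 l3a_f29 cl)
lemma l3a_f87: "x2 \<in> A \<Longrightarrow> x3 \<in> A \<Longrightarrow> x4 \<in> A \<Longrightarrow> (m x3 (m x2 x4)) = (m x4 (m x3 x2))"
  by (metis a9 comm cl)
lemma l3a_f1677: "x33 \<in> A \<Longrightarrow> x34 \<in> A \<Longrightarrow> x35 \<in> A \<Longrightarrow> x36 \<in> A \<Longrightarrow> x37 \<in> A \<Longrightarrow> (m x33 (m x37 (c x33))) = (m (m x33 x37) (m x34 (m x36 (m (c x34) x35))))"
  by (metis l3a_f1589 l3a_f87 cl)
lemma l3a_f177771: "x100 \<in> A \<Longrightarrow> x101 \<in> A \<Longrightarrow> x96 \<in> A \<Longrightarrow> x97 \<in> A \<Longrightarrow> x98 \<in> A \<Longrightarrow> x99 \<in> A \<Longrightarrow> (m x96 (c (m (c x101) (c (m x97 (c x96)))))) = (c (m (c (m x101 x96)) (c (m (m x96 x97) (m x98 (m x99 (m (c x98) x100)))))))"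
  by (metis l3a_f1806 l3a_f1677 cl)
lemma l3a_f1575: "x74 \<in> A \<Longrightarrow> x75 \<in> A \<Longrightarrow> x76 \<in> A \<Longrightarrow> x77 \<in> A \<Longrightarrow> (m (m x74 x75) (m x76 x77)) = (m (m x74 (m x75 x76)) (m (m x74 x75) x77))"
  by (metis l3a_f31 assoc cl)
lemma l3a_f1666: "x74 \<in> A \<Longrightarrow> x75 \<in> A \<Longrightarrow> x76 \<in> A \<Longrightarrow> x77 \<in> A \<Longrightarrow> (m (m x74 x75) (m x76 x77)) = (m (m x74 (m x75 x76)) (m x74 (m x75 x77)))"
  by (metis l3a_f1575 assoc cl)
lemma l3a_f1667: "x74 \<in> A \<Longrightarrow> x75 \<in> A \<Longrightarrow> x76 \<in> A \<Longrightarrow> x77 \<in> A \<Longrightarrow> (m (m x74 (m x75 x76)) (m x74 (m x75 x77))) = (m x74 (m x75 (m x76 x77)))"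
  by (metis l3a_f1666 assoc cl)
lemma l3a_f230: "x13 \<in> A \<Longrightarrow> x14 \<in> A \<Longrightarrow> x15 \<in> A \<Longrightarrow> (m x13 (m x14 (c (m x13 x14)))) = (m x15 (m x13 (m x14 (c (m x13 x14)))))"
  by (metis bota assoc cl)
lemma l3a_f315: "x1 \<in> A \<Longrightarrow> x2 \<in> A \<Longrightarrow> (m x1 (c x2)) = (m x1 (c (m x2 x1)))"
  by (metis mnc comm cl)
lemma l3a_f335: "x13 \<in> A \<Longrightarrow> x14 \<in> A \<Longrightarrow> x15 \<in> A \<Longrightarrow> (m x13 (m x14 (c x13))) = (m x15 (m x13 (m x14 (c x13))))"
  by (metis l3a_f230 l3a_f315 cl)
lemma l3a_f171090: "x56 \<in> A \<Longrightarrow> x57 \<in> A \<Longrightarrow> x58 \<in> A \<Longrightarrow> x59 \<in> A \<Longrightarrow> (m x56 (m x57 (m (m x58 (c x57)) x59))) = (m (m x57 (m x58 (c x57))) (m x56 (m x57 x59)))"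
  by (metis l3a_f1667 l3a_f335 cl)
lemma l3a_f234: "x10 \<in> A \<Longrightarrow> x9 \<in> A \<Longrightarrow> (m x10 (c x10)) = (m (m x10 (c x10)) x9)"
  by (metis bota comm cl)
lemma l3a_f1063: "x20 \<in> A \<Longrightarrow> x21 \<in> A \<Longrightarrow> x22 \<in> A \<Longrightarrow> (m x21 (c x21)) = (m (c x20) (m x20 x22))"
  by (metis l3a_f29 idem cl)
lemma l3a_f7152: "x29 \<in> A \<Longrightarrow> x30 \<in> A \<Longrightarrow> x31 \<in> A \<Longrightarrow> (m (c x29) (m x29 x30)) = (m (m (c x29) (m x29 x30)) x31)"
  by (metis l3a_f234 l3a_f1063 cl)
lemma l3a_f7274: "x29 \<in> A \<Longrightarrow> x30 \<in> A \<Longrightarrow> x31 \<in> A \<Longrightarrow> (m x29 (m x30 (c x29))) = (m (m x29 (m x30 (c x29))) x31)"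
  by (metis l3a_f7152 l3a_f87 cl)
lemma l3a_f172321: "x56 \<in> A \<Longrightarrow> x57 \<in> A \<Longrightarrow> x58 \<in> A \<Longrightarrow> x59 \<in> A \<Longrightarrow> (m x57 (m x58 (c x57))) = (m x56 (m x57 (m (m x58 (c x57)) x59)))"
  by (metis l3a_f171090 l3a_f7274 cl)
lemma l3a_f172322: "x56 \<in> A \<Longrightarrow> x57 \<in> A \<Longrightarrow> x58 \<in> A \<Longrightarrow> x59 \<in> A \<Longrightarrow> (m x57 (m x58 (c x57))) = (m x56 (m x57 (m x58 (m (c x57) x59))))"
  by (metis l3a_f172321 assoc cl)
lemma l3a_f178840: "x101 \<in> A \<Longrightarrow> x96 \<in> A \<Longrightarrow> x97 \<in> A \<Longrightarrow> x98 \<in> A \<Longrightarrow> x99 \<in> A \<Longrightarrow> (m x96 (c (m (c x101) (c (m x97 (c x96)))))) = (c (m (c (m x101 x96)) (c (m x98 (m x99 (c x98))))))"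
  by (metis l3a_f177771 l3a_f172322 cl)
lemma l3a_f68: "x0 \<in> A \<Longrightarrow> x1 \<in> A \<Longrightarrow> (m x1 (c x1)) = (m (c x0) x0)"
  by (metis botc j4 cl)
lemma l3a_f320: "x17 \<in> A \<Longrightarrow> x18 \<in> A \<Longrightarrow> (m x17 (c (c x17))) = (m x17 (c (m (c x18) x18)))"
  by (metis mnc l3a_f68 cl)
lemma l3a_f340: "x17 \<in> A \<Longrightarrow> x18 \<in> A \<Longrightarrow> (m x17 (c (c x17))) = (m x17 (c (m x18 (c x18))))"
  by (metis l3a_f320 comm cl)
lemma l3a_f341: "x17 \<in> A \<Longrightarrow> x18 \<in> A \<Longrightarrow> (m x17 (c (m x18 (c x18)))) = (m x17 x17)"
  by (metis l3a_f340 j4 cl)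
lemma l3a_f342: "x17 \<in> A \<Longrightarrow> x18 \<in> A \<Longrightarrow> (m x17 (c (m x18 (c x18)))) = x17"
  by (metis l3a_f341 idem cl)
lemma l3a_f600: "x17 \<in> A \<Longrightarrow> x18 \<in> A \<Longrightarrow> x19 \<in> A \<Longrightarrow> (m x19 (c (m x17 (m x18 (c (m x17 x18)))))) = x19"
  by (metis l3a_f342 assoc cl)
lemma l3a_f639: "x17 \<in> A \<Longrightarrow> x18 \<in> A \<Longrightarrow> x19 \<in> A \<Longrightarrow> (m x19 (c (m x17 (m x18 (c x17))))) = x19"
  by (metis l3a_f600 l3a_f315 cl)
lemma l3a_f178841: "x101 \<in> A \<Longrightarrow> x96 \<in> A \<Longrightarrow> x97 \<in> A \<Longrightarrow> (m x96 (c (m (c x101) (c (m x97 (c x96)))))) = (c (c (m x101 x96)))"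
  by (metis l3a_f178840 l3a_f639 cl)
lemma l3a_f178842: "x101 \<in> A \<Longrightarrow> x96 \<in> A \<Longrightarrow> x97 \<in> A \<Longrightarrow> (m x101 x96) = (m x96 (c (m (c x101) (c (m x97 (c x96))))))"
  by (metis l3a_f178841 j4 cl)
lemma l3a_f149: "x0 \<in> A \<Longrightarrow> x1 \<in> A \<Longrightarrow> (m x0 x1) = (m x0 (m x0 x1))"
  by (metis assoc idem cl)
lemma l3a_f1813: "x25 \<in> A \<Longrightarrow> x26 \<in> A \<Longrightarrow> x27 \<in> A \<Longrightarrow> (m x25 (c (m (c (m x25 x26)) (c x27)))) = (c (m (c (m x25 x26)) (c (m x25 x27))))"
  by (metis dist l3a_f149 cl)
lemma l3a_f1913: "x25 \<in> A \<Longrightarrow> x26 \<in> A \<Longrightarrow> x27 \<in> A \<Longrightarrow> (m x25 (c (m (c (m x25 x26)) (c x27)))) = (m x25 (c (m (c x26) (c x27))))"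
  by (metis l3a_f1813 dist cl)
lemma l3a: "s0 \<in> A \<Longrightarrow> s1 \<in> A \<Longrightarrow> u1 \<in> A \<Longrightarrow> x \<in> A \<Longrightarrow> (m (c (m (c (m x s1)) (c (m (c x) s0)))) (m x u1)) = (m x (m s1 u1))"
  by (metis a9 comm l3a_f178842 l3a_f1913 cl)

lemma l3b_f92: "x2 \<in> A \<Longrightarrow> x3 \<in> A \<Longrightarrow> x4 \<in> A \<Longrightarrow> (m x3 (m x2 x4)) = (m x4 (m x3 x2))"
  by (metis a9 comm cl)
lemma l3b_f32: "x0 \<in> A \<Longrightarrow> x1 \<in> A \<Longrightarrow> x2 \<in> A \<Longrightarrow> (m x0 (m x1 x2)) = (m (m x0 x1) (m x0 x2))"
  by (metis pr cl)
lemma l3b_f1579: "x65 \<in> A \<Longrightarrow> x66 \<in> A \<Longrightarrow> x67 \<in> A \<Longrightarrow> (m (c (m x65 x66)) (m (c (m x65 (c x66))) x67)) = (m (c x65) (m (c (m x65 x66)) x67))"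
  by (metis l3b_f32 j5 cl)
lemma l3b_f534: "x11 \<in> A \<Longrightarrow> x12 \<in> A \<Longrightarrow> x13 \<in> A \<Longrightarrow> (m (c (m x11 x12)) (m (c (m x11 (c x12))) x13)) = (m (c x11) x13)"
  by (metis assoc j5 cl)
lemma l3b_f1670: "x65 \<in> A \<Longrightarrow> x66 \<in> A \<Longrightarrow> x67 \<in> A \<Longrightarrow> (m (c x65) x67) = (m (c x65) (m (c (m x65 x66)) x67))"
  by (metis l3b_f1579 l3b_f534 cl)
lemma l3b_f514: "x35 \<in> A \<Longrightarrow> x36 \<in> A \<Longrightarrow> (c (c (m x35 x36))) = (m (c (c x35)) (c (m (c (m x35 x36)) (c (c (m x35 (c x36)))))))"
  by (metis j5 j5 cl)
lemma l3b_f560: "x35 \<in> A \<Longrightarrow> x36 \<in> A \<Longrightarrow> (c (c (m x35 x36))) = (m (c (c x35)) (c (m (c (m x35 x36)) (m x35 (c x36)))))"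
  by (metis l3b_f514 j4 cl)
lemma l3b_f561: "x35 \<in> A \<Longrightarrow> x36 \<in> A \<Longrightarrow> (c (c (m x35 x36))) = (m (c (c x35)) (c (m (c x36) (m x35 (c (m x35 x36))))))"
  by (metis l3b_f560 a9 cl)
lemma l3b_f562: "x35 \<in> A \<Longrightarrow> x36 \<in> A \<Longrightarrow> (c (c (m x35 x36))) = (m (c (c x35)) (c (m (c x36) (m x35 (c x36)))))"
  by (metis l3b_f561 mnc cl)
lemma l3b_f91: "x0 \<in> A \<Longrightarrow> x1 \<in> A \<Longrightarrow> (m x1 x0) = (m x0 (m x0 x1))"
  by (metis a9 idem cl)
lemma l3b_f138: "x1 \<in> A \<Longrightarrow> x2 \<in> A \<Longrightarrow> (m x2 x1) = (m x1 (m x2 x1))"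
  by (metis l3b_f91 comm cl)
lemma l3b_f563: "x35 \<in> A \<Longrightarrow> x36 \<in> A \<Longrightarrow> (c (c (m x35 x36))) = (m (c (c x35)) (c (m x35 (c x36))))"
  by (metis l3b_f562 l3b_f138 cl)
lemma l3b_f564: "x35 \<in> A \<Longrightarrow> x36 \<in> A \<Longrightarrow> (c (c (m x35 x36))) = (m x35 (c (m x35 (c x36))))"
  by (metis l3b_f563 j4 cl)
lemma l3b_f565: "x35 \<in> A \<Longrightarrow> x36 \<in> A \<Longrightarrow> (m x35 x36) = (m x35 (c (m x35 (c x36))))"
  by (metis l3b_f564 j4 cl)
lemma l3b_f498: "x1 \<in> A \<Longrightarrow> x2 \<in> A \<Longrightarrow> (c x1) = (m (c (m x2 x1)) (c (m x1 (c x2))))"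
  by (metis j5 comm cl)
lemma l3b_f9306: "x53 \<in> A \<Longrightarrow> x54 \<in> A \<Longrightarrow> (m (c (m x53 x54)) (m x54 (c x53))) = (m (c (m x53 x54)) (c (c x54)))"
  by (metis l3b_f565 l3b_f498 cl)
lemma l3b_f9586: "x53 \<in> A \<Longrightarrow> x54 \<in> A \<Longrightarrow> (m (c (m x53 x54)) (m x54 (c x53))) = (m (c (c x54)) (c (m x53 x54)))"
  by (metis l3b_f9306 comm cl)
lemma l3b_f9587: "x53 \<in> A \<Longrightarrow> x54 \<in> A \<Longrightarrow> (m x54 (c (m x53 x54))) = (m (c (m x53 x54)) (m x54 (c x53)))"
  by (metis l3b_f9586 j4 cl)
lemma l3b_f33: "x0 \<in> A \<Longrightarrow> x1 \<in> A \<Longrightarrow> x2 \<in> A \<Longrightarrow> x3 \<in> A \<Longrightarrow> (m (c (m (c (m x0 x1)) (c (m (c x0) x2)))) (m x0 x3)) = (m x0 (m x1 x3))"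
  by (metis l3a cl)
lemma l3b_f156: "x0 \<in> A \<Longrightarrow> x1 \<in> A \<Longrightarrow> (m x0 x1) = (m x0 (m x0 x1))"
  by (metis assoc idem cl)
lemma l3b_f538: "x20 \<in> A \<Longrightarrow> x21 \<in> A \<Longrightarrow> (c x20) = (m (c (m x20 x21)) (c x20))"
  by (metis l3b_f156 j5 cl)
lemma l3b_f4933: "x85 \<in> A \<Longrightarrow> x86 \<in> A \<Longrightarrow> x87 \<in> A \<Longrightarrow> x88 \<in> A \<Longrightarrow> (m (c (m x85 x86)) (m x87 (c x85))) = (m (c (m (c (m (c (m x85 x86)) x87)) (c (m (c (c (m x85 x86))) x88)))) (c x85))"
  by (metis l3b_f33 l3b_f538 cl)
lemma l3b_f5012: "x85 \<in> A \<Longrightarrow> x86 \<in> A \<Longrightarrow> x87 \<in> A \<Longrightarrow> x88 \<in> A \<Longrightarrow> (m (c (m x85 x86)) (m x87 (c x85))) = (m (c (m (c (m (c (m x85 x86)) x87)) (c (m (m x85 x86) x88)))) (c x85))"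
  by (metis l3b_f4933 j4 cl)
lemma l3b_f5013: "x85 \<in> A \<Longrightarrow> x86 \<in> A \<Longrightarrow> x87 \<in> A \<Longrightarrow> x88 \<in> A \<Longrightarrow> (m (c (m x85 x86)) (m x87 (c x85))) = (m (c (m (c (m (c (m x85 x86)) x87)) (c (m x85 (m x86 x88))))) (c x85))"
  by (metis l3b_f5012 assoc cl)
lemma l3b_f3281: "x103 \<in> A \<Longrightarrow> x104 \<in> A \<Longrightarrow> x105 \<in> A \<Longrightarrow> x106 \<in> A \<Longrightarrow> (m (c (m x103 x104)) (m x105 (c (m x103 (c x104))))) = (m (c (m (c (m (c (m x103 x104)) x105)) (c (m (c (c (m x103 x104))) x106)))) (c x103))"
  by (metis l3b_f33 j5 cl)
lemma l3b_f3514: "x103 \<in> A \<Longrightarrow> x104 \<in> A \<Longrightarrow> x105 \<in> A \<Longrightarrow> x106 \<in> A \<Longrightarrow> (m (c (m x103 x104)) (m x105 (c (m x103 (c x104))))) = (m (c (m (c (m (c (m x103 x104)) x105)) (c (m (m x103 x104) x106)))) (c x103))"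
  by (metis l3b_f3281 j4 cl)
lemma l3b_f3515: "x103 \<in> A \<Longrightarrow> x104 \<in> A \<Longrightarrow> x105 \<in> A \<Longrightarrow> x106 \<in> A \<Longrightarrow> (m (c (m x103 x104)) (m x105 (c (m x103 (c x104))))) = (m (c (m (c (m (c (m x103 x104)) x105)) (c (m x103 (m x104 x106))))) (c x103))"
  by (metis l3b_f3514 assoc cl)
lemma l3b_f1606: "x65 \<in> A \<Longrightarrow> x66 \<in> A \<Longrightarrow> x67 \<in> A \<Longrightarrow> (m (c (m x65 x66)) (m x67 (c (m x65 (c x66))))) = (m (m (c (m x65 x66)) x67) (c x65))"
  by (metis l3b_f32 j5 cl)
lemma l3b_f1690: "x65 \<in> A \<Longrightarrow> x66 \<in> A \<Longrightarrow> x67 \<in> A \<Longrightarrow> (m (c x65) (m (c (m x65 x66)) x67)) = (m (c (m x65 x66)) (m x67 (c (m x65 (c x66)))))"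
  by (metis l3b_f1606 comm cl)
lemma l3b_f1691: "x65 \<in> A \<Longrightarrow> x66 \<in> A \<Longrightarrow> x67 \<in> A \<Longrightarrow> (m (c x65) x67) = (m (c (m x65 x66)) (m x67 (c (m x65 (c x66)))))"
  by (metis l3b_f1690 l3b_f1670 cl)
lemma l3b_f3516: "x103 \<in> A \<Longrightarrow> x104 \<in> A \<Longrightarrow> x105 \<in> A \<Longrightarrow> x106 \<in> A \<Longrightarrow> (m (c x103) x105) = (m (c (m (c (m (c (m x103 x104)) x105)) (c (m x103 (m x104 x106))))) (c x103))"
  by (metis l3b_f3515 l3b_f1691 cl)
lemma l3b_f5014: "x85 \<in> A \<Longrightarrow> x86 \<in> A \<Longrightarrow> x87 \<in> A \<Longrightarrow> (m (c x85) x87) = (m (c (m x85 x86)) (m x87 (c x85)))"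
  by (metis l3b_f5013 l3b_f3516 cl)
lemma l3b_f9588: "x53 \<in> A \<Longrightarrow> x54 \<in> A \<Longrightarrow> (m (c x53) x54) = (m x54 (c (m x53 x54)))"
  by (metis l3b_f9587 l3b_f5014 cl)
lemma l3b_f41297: "x325 \<in> A \<Longrightarrow> x326 \<in> A \<Longrightarrow> x327 \<in> A \<Longrightarrow> (m (c x325) (c (m x327 (c (m x325 x326))))) = (m (c x325) (m (c x327) (c (m x325 x326))))"
  by (metis l3b_f1670 l3b_f9588 cl)
lemma l3b_f5051: "x108 \<in> A \<Longrightarrow> x109 \<in> A \<Longrightarrow> x110 \<in> A \<Longrightarrow> (m (c x108) (m x110 (c (m x108 x109)))) = (m x110 (c x108))"
  by (metis l3b_f92 l3b_f538 cl)
lemma l3b_f41680: "x325 \<in> A \<Longrightarrow> x326 \<in> A \<Longrightarrow> x327 \<in> A \<Longrightarrow> (m (c x327) (c x325)) = (m (c x325) (c (m x327 (c (m x325 x326)))))"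
  by (metis l3b_f41297 l3b_f5051 cl)
lemma l3b_f29: "x0 \<in> A \<Longrightarrow> x1 \<in> A \<Longrightarrow> (c (m (c (m x0 x1)) (c (m (c x0) x1)))) = x1"
  by (metis l1 cl)
lemma l3b_f659: "x17 \<in> A \<Longrightarrow> x18 \<in> A \<Longrightarrow> (m x17 x18) = (c (m (c (m x18 x17)) (c (m (c x17) (m x17 x18)))))"
  by (metis l3b_f29 l3b_f91 cl)
lemma l3b_f720: "x17 \<in> A \<Longrightarrow> x18 \<in> A \<Longrightarrow> (m x17 x18) = (c (m (c (m x18 x17)) (c (m x17 (m x18 (c x17))))))"
  by (metis l3b_f659 l3b_f92 cl)
lemma l3b_f73: "x0 \<in> A \<Longrightarrow> x1 \<in> A \<Longrightarrow> (m x1 (c x1)) = (m (c x0) x0)"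
  by (metis botc j4 cl)
lemma l3b_f327: "x17 \<in> A \<Longrightarrow> x18 \<in> A \<Longrightarrow> (m x17 (c (c x17))) = (m x17 (c (m (c x18) x18)))"
  by (metis mnc l3b_f73 cl)
lemma l3b_f347: "x17 \<in> A \<Longrightarrow> x18 \<in> A \<Longrightarrow> (m x17 (c (c x17))) = (m x17 (c (m x18 (c x18))))"
  by (metis l3b_f327 comm cl)
lemma l3b_f348: "x17 \<in> A \<Longrightarrow> x18 \<in> A \<Longrightarrow> (m x17 (c (m x18 (c x18)))) = (m x17 x17)"
  by (metis l3b_f347 j4 cl)
lemma l3b_f349: "x17 \<in> A \<Longrightarrow> x18 \<in> A \<Longrightarrow> (m x17 (c (m x18 (c x18)))) = x17"
  by (metis l3b_f348 idem cl)
lemma l3b_f607: "x17 \<in> A \<Longrightarrow> x18 \<in> A \<Longrightarrow> x19 \<in> A \<Longrightarrow> (m x19 (c (m x17 (m x18 (c (m x17 x18)))))) = x19"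
  by (metis l3b_f349 assoc cl)
lemma l3b_f322: "x1 \<in> A \<Longrightarrow> x2 \<in> A \<Longrightarrow> (m x1 (c x2)) = (m x1 (c (m x2 x1)))"
  by (metis mnc comm cl)
lemma l3b_f646: "x17 \<in> A \<Longrightarrow> x18 \<in> A \<Longrightarrow> x19 \<in> A \<Longrightarrow> (m x19 (c (m x17 (m x18 (c x17))))) = x19"
  by (metis l3b_f607 l3b_f322 cl)
lemma l3b_f721: "x17 \<in> A \<Longrightarrow> x18 \<in> A \<Longrightarrow> (m x17 x18) = (c (c (m x18 x17)))"
  by (metis l3b_f720 l3b_f646 cl)
lemma l3b_f1893: "x15 \<in> A \<Longrightarrow> x16 \<in> A \<Longrightarrow> x17 \<in> A \<Longrightarrow> (m (c (m x15 x17)) (c (m x15 x16))) = (c (m x15 (c (m (c x16) (c x17)))))"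
  by (metis l3b_f721 dist cl)
lemma l3b_f2075: "x0 \<in> A \<Longrightarrow> x1 \<in> A \<Longrightarrow> x2 \<in> A \<Longrightarrow> (m x0 (c (m (c x1) (c x2)))) = (c (c (m x0 (c (m (c x2) (c x1))))))"
  by (metis dist l3b_f1893 cl)
lemma l3b_f2673: "x6 \<in> A \<Longrightarrow> x7 \<in> A \<Longrightarrow> x8 \<in> A \<Longrightarrow> (m x6 (c (m (c x7) (c x8)))) = (m x6 (c (m (c x8) (c x7))))"
  by (metis l3b_f2075 j4 cl)
lemma l3b_f843: "x15 \<in> A \<Longrightarrow> x16 \<in> A \<Longrightarrow> (c (c (m x15 x16))) = (m (m x15 x16) x15)"
  by (metis l3b_f721 l3b_f156 cl)
lemma l3b_f873: "x15 \<in> A \<Longrightarrow> x16 \<in> A \<Longrightarrow> (m x15 x16) = (m (m x15 x16) x15)"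
  by (metis l3b_f843 j4 cl)
lemma l3b_f1508: "x3 \<in> A \<Longrightarrow> x4 \<in> A \<Longrightarrow> (m x3 x4) = (m x3 (m x4 x3))"
  by (metis l3b_f873 assoc cl)
lemma l3b_f1851: "x19 \<in> A \<Longrightarrow> x20 \<in> A \<Longrightarrow> x21 \<in> A \<Longrightarrow> (m x19 (c (m (c x21) (c (m x20 x19))))) = (c (m (c (m x19 x21)) (c (m x19 x20))))"
  by (metis dist l3b_f1508 cl)
lemma l3b_f1989: "x19 \<in> A \<Longrightarrow> x20 \<in> A \<Longrightarrow> x21 \<in> A \<Longrightarrow> (m x19 (c (m (c x21) (c (m x20 x19))))) = (m x19 (c (m (c x21) (c x20))))"
  by (metis l3b_f1851 dist cl)
lemma l3b: "s0 \<in> A \<Longrightarrow> s1 \<in> A \<Longrightarrow> u0 \<in> A \<Longrightarrow> x \<in> A \<Longrightarrow> (m (c (m (c (m x s1)) (c (m (c x) s0)))) (m (c x) u0)) = (m (c x) (m s0 u0))"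
  by (metis a9 comm j4 l3b_f1989 l3b_f2673 l3b_f41680 l3b_f92 cl)
lemma l3: "s0 \<in> A \<Longrightarrow> s1 \<in> A \<Longrightarrow> u0 \<in> A \<Longrightarrow> u1 \<in> A \<Longrightarrow> x \<in> A \<Longrightarrow>
  m (c (m (c (m x s1)) (c (m (c x) s0)))) (c (m (c (m x u1)) (c (m (c x) u0))))
  = c (m (c (m x (m s1 u1))) (c (m (c x) (m s0 u0))))"
proof -
  assume h: "s0 \<in> A" "s1 \<in> A" "u0 \<in> A" "u1 \<in> A" "x \<in> A"
  let ?P = "c (m (c (m x s1)) (c (m (c x) s0)))"
  have P: "?P \<in> A" using h cl by simp
  have "m ?P (c (m (c (m x u1)) (c (m (c x) u0)))) = c (m (c (m ?P (m x u1))) (c (m ?P (m (c x) u0))))"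
    using dist[OF P, of "m x u1" "m (c x) u0"] h cl by simp
  also have "\<dots> = c (m (c (m x (m s1 u1))) (c (m (c x) (m s0 u0))))"
    using l3a[of s0 s1 u1 x] l3b[of s0 s1 u0 x] h by simp
  finally show ?thesis .
qed

definition T where "T = c (m a0 (c a0))"

lemma T_A: "T \<in> A" unfolding T_def using cl by simp
lemma cT_A: "c T \<in> A" using T_A cl by simp

lemma eval_A: "(\<forall>k. v k \<in> A) \<Longrightarrow> eval m c v t \<in> A"
  by (induction t) (auto intro: cl)

lemma shannon:
  assumes v: "\<forall>k. v k \<in> A"
  shows "eval m c v t = c (m (c (m (v i) (eval m c (v(i:=T)) t))) (c (m (c (v i)) (eval m c (v(i:=c T)) t))))"
proof (induction t)
  case (Var k)
  show ?case
  proof (cases "k = i")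
    case True
    then show ?thesis using l2[of "v i"] v by (simp add: T_def)
  next
    case False
    then show ?thesis using l1[of "v k" "v i"] v by simp
  qed
next
  case (Meet s u)
  have v1: "\<forall>k. (v(i:=T)) k \<in> A" and v0: "\<forall>k. (v(i:=c T)) k \<in> A" using v T_A cT_A by auto
  let ?s1 = "eval m c (v(i:=T)) s" and ?s0 = "eval m c (v(i:=c T)) s"
  let ?u1 = "eval m c (v(i:=T)) u" and ?u0 = "eval m c (v(i:=c T)) u"
  have "eval m c v (Meet s u) = m (eval m c v s) (eval m c v u)" by simp
  also have "\<dots> = m (c (m (c (m (v i) ?s1)) (c (m (c (v i)) ?s0)))) (c (m (c (m (v i) ?u1)) (c (m (c (v i)) ?u0))))"
    by (simp only: Meet.IH)
  also have "\<dots> = c (m (c (m (v i) (m ?s1 ?u1))) (c (m (c (v i)) (m ?s0 ?u0))))"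
    using eval_A[OF v1] eval_A[OF v0] v by (intro l3) blast+
  finally show ?case by (simp only: eval.simps)
next
  case (Cmp s)
  have v1: "\<forall>k. (v(i:=T)) k \<in> A" and v0: "\<forall>k. (v(i:=c T)) k \<in> A" using v T_A cT_A by auto
  let ?s1 = "eval m c (v(i:=T)) s" and ?s0 = "eval m c (v(i:=c T)) s"
  have "eval m c v (Cmp s) = c (eval m c v s)" by simp
  also have "\<dots> = c (c (m (c (m (v i) ?s1)) (c (m (c (v i)) ?s0))))"
    by (simp only: Cmp.IH)
  also have "\<dots> = c (m (c (m (v i) (c ?s1))) (c (m (c (v i)) (c ?s0))))"
    using eval_A[OF v1] eval_A[OF v0] v by (intro l4) blast+
  finally show ?case by (simp only: eval.simps)
qed

lemma twoval:
  assumes v: "\<forall>k. v k \<in> {T, c T}"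
  shows "eval m c v t = (if eval (\<and>) Not (\<lambda>k. v k = T) t then T else c T)"
proof (induction t)
  case (Var k)
  then show ?case using v by auto
next
  case (Meet s u)
  then show ?case using l5a l5b l5c l5d by (simp add: T_def)
next
  case (Cmp s)
  then show ?case using j4[OF T_A] by simp
qed

lemma valid_n:
  assumes st: "\<forall>w. eval (\<and>) Not w s = eval (\<and>) Not w t"
  shows "\<forall>v. (\<forall>k. v k \<in> A) \<longrightarrow> (\<forall>k\<ge>n. v k \<in> {T, c T}) \<longrightarrow> eval m c v s = eval m c v t"
proof (induction n)
  case 0
  then show ?case using twoval st by simp
next
  case (Suc n)
  show ?case
  proof (intro allI impI)
    fix v assume v: "\<forall>k. v k \<in> A" and vn: "\<forall>k\<ge>Suc n. v k \<in> {T, c T}"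
    have v1: "\<forall>k. (v(n:=T)) k \<in> A" and v0: "\<forall>k. (v(n:=c T)) k \<in> A" using v T_A cT_A by auto
    have n1: "\<forall>k\<ge>n. (v(n:=T)) k \<in> {T, c T}" and n0: "\<forall>k\<ge>n. (v(n:=c T)) k \<in> {T, c T}"
      using vn by (auto simp: Suc_le_eq)
    have e1: "eval m c (v(n:=T)) s = eval m c (v(n:=T)) t" using Suc.IH v1 n1 by blast
    have e0: "eval m c (v(n:=c T)) s = eval m c (v(n:=c T)) t" using Suc.IH v0 n0 by blast
    show "eval m c v s = eval m c v t"
      by (subst shannon[OF v, of s n], subst shannon[OF v, of t n]) (simp only: e1 e0)
  qed
qed

end

lemma eval_bound: "\<exists>n. \<forall>v w. (\<forall>k<n. v k = w k) \<longrightarrow> eval m c v t = eval m c w t"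
proof (induction t)
  case (Var i)
  then show ?case by (rule exI[of _ "Suc i"]) auto
next
  case (Meet s u)
  then obtain a b where a: "\<forall>v w. (\<forall>k<a. v k = w k) \<longrightarrow> eval m c v s = eval m c w s"
    and b: "\<forall>v w. (\<forall>k<b. v k = w k) \<longrightarrow> eval m c v u = eval m c w u" by blast
  show ?case
  proof (intro exI allI impI)
    fix v w :: "nat \<Rightarrow> 'a" assume h: "\<forall>k<max a b. v k = w k"
    then have "eval m c v s = eval m c w s" using a by auto
    moreover have "eval m c v u = eval m c w u" using h b by auto
    ultimately show "eval m c v (Meet s u) = eval m c w (Meet s u)" by simp
  qed
next
  case (Cmp s)
  then obtain n where n: "\<forall>v w. (\<forall>k<n. v k = w k) \<longrightarrow> eval m c v s = eval m c w s" by blast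
  show ?case
  proof (intro exI allI impI)
    fix v w :: "nat \<Rightarrow> 'a" assume h: "\<forall>k<n. v k = w k"
    have "eval m c v s = eval m c w s" using n h by blast
    then show "eval m c v (Cmp s) = eval m c w (Cmp s)" by simp
  qed
qed

lemma ba3_valid:
  assumes "ba3 A m c a0" and st: "sat (UNIV :: bool set) (\<and>) Not e"
  shows "sat A m c e"
proof -
  interpret ba3 A m c a0 by fact
  obtain s t where e: "e = (s, t)" by fastforce
  have st': "\<forall>w. eval (\<and>) Not w s = eval (\<and>) Not w t" using st e by (simp add: sat_def)
  obtain n1 where n1: "\<forall>v w. (\<forall>k<n1. v k = w k) \<longrightarrow> eval m c v s = eval m c w s" using eval_bound by blast
  obtain n2 where n2: "\<forall>v w. (\<forall>k<n2. v k = w k) \<longrightarrow> eval m c v t = eval m c w t" using eval_bound by blast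
  show ?thesis unfolding sat_def e
  proof (intro allI impI)
    fix v :: "nat \<Rightarrow> 'a" assume v: "\<forall>i. v i \<in> A"
    define v' where "v' = (\<lambda>k. if k < max n1 n2 then v k else T)"
    have "\<forall>k. v' k \<in> A" using v T_A by (simp add: v'_def)
    moreover have "\<forall>k\<ge>max n1 n2. v' k \<in> {T, c T}" by (auto simp: v'_def)
    ultimately have "eval m c v' s = eval m c v' t" using valid_n[OF st'] by blast
    moreover have "eval m c v s = eval m c v' s" by (intro n1[rule_format]) (auto simp: v'_def)
    moreover have "eval m c v t = eval m c v' t" by (intro n2[rule_format]) (auto simp: v'_def)
    ultimately show "eval m c v (fst (s, t)) = eval m c v (snd (s, t))" by simp
  qed
qed

lemma models_ba3:
  assumes alg: "algebra A m c" and mo: "models A m c {A9, J4, J5}" and a0: "a0 \<in> A"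
  shows "ba3 A m c a0"
proof -
  have s9: "sat A m c A9" and s4: "sat A m c J4" and s5: "sat A m c J5" using mo by (auto simp: models_def)
  have c1: "\<And>x y. x\<in>A \<Longrightarrow> y\<in>A \<Longrightarrow> m x y \<in> A" and c2: "\<And>x. x\<in>A \<Longrightarrow> c x \<in> A"
    using alg by (auto simp: algebra_def)
  have r9: "m x (m y z) = m z (m y x)" if x: "x \<in> A" and y: "y \<in> A" and z: "z \<in> A" for x y z
  proof -
    define v where "v = (\<lambda>i::nat. if i = 0 then x else if i = 1 then y else z)"
    have v: "\<forall>i. v i \<in> A" using x y z by (simp add: v_def)
    have "m (v 0) (m (v 1) (v 2)) = m (v 2) (m (v 1) (v 0))" using s9 v unfolding sat_def A9_def fst_conv snd_conv eval.simps by blast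
    then show ?thesis by (simp add: v_def)
  qed
  have r4: "c (c x) = x" if x: "x \<in> A" for x
  proof -
    define v where "v = (\<lambda>i::nat. x)"
    have v: "\<forall>i. v i \<in> A" using x by (simp add: v_def)
    have "c (c (v 0)) = v 0" using s4 v unfolding sat_def J4_def fst_conv snd_conv eval.simps by blast
    then show ?thesis by (simp add: v_def)
  qed
  have r5: "c x = m (c (m x y)) (c (m x (c y)))" if x: "x \<in> A" and y: "y \<in> A" for x y
  proof -
    define v where "v = (\<lambda>i::nat. if i = 0 then x else y)"
    have v: "\<forall>i. v i \<in> A" using x y by (simp add: v_def)
    have "c (v 0) = m (c (m (v 0) (v 1))) (c (m (v 0) (c (v 1))))" using s5 v unfolding sat_def J5_def fst_conv snd_conv eval.simps by blast
    then show ?thesis by (simp add: v_def)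
  qed
  show ?thesis by (rule ba3.intro) (fact c1 c2 a0 r9 r4 r5)+
qed

lemma defines_part: "defines_BA TYPE('a) {A9, J4, J5}"
  unfolding defines_BA_def
proof (intro allI impI)
  fix A :: "'a set" and m c assume alg: "algebra A m c"
  show "models A m c {A9, J4, J5} = in_BA A m c"
  proof
    assume mo: "models A m c {A9, J4, J5}"
    obtain a0 where a0: "a0 \<in> A" using alg by (auto simp: algebra_def)
    have b: "ba3 A m c a0" using models_ba3[OF alg mo a0] .
    show "in_BA A m c" unfolding in_BA_def using alg ba3_valid[OF b] by blast
  next
    assume "in_BA A m c"
    then have h: "\<And>e. sat (UNIV :: bool set) (\<and>) Not e \<Longrightarrow> sat A m c e" by (auto simp: in_BA_def)
    have "sat (UNIV :: bool set) (\<and>) Not A9" by (auto simp: sat_def A9_def)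
    moreover have "sat (UNIV :: bool set) (\<and>) Not J4" by (auto simp: sat_def J4_def)
    moreover have "sat (UNIV :: bool set) (\<and>) Not J5" by (auto simp: sat_def J5_def)
    ultimately show "models A m c {A9, J4, J5}" using h by (auto simp: models_def)
  qed
qed

lemma distinct3: "A9 \<noteq> J4" "A9 \<noteq> J5" "J4 \<noteq> J5"
  by (auto simp: A9_def J4_def J5_def)

lemma indep_part: "independent {A9, J4, J5}"
  unfolding independent_def
proof (intro ballI)
  fix e assume "e \<in> {A9, J4, J5}"
  then consider "e = A9" | "e = J4" | "e = J5" by blast
  then show "\<exists>(B::nat set) m c. algebra B m c \<and> models B m c ({A9, J4, J5} - {e}) \<and> \<not> sat B m c e"
  proof cases
    case 1
    have "algebra {0,1} (\<lambda>x y. x) (\<lambda>x::nat. x)" by (auto simp: algebra_def)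
    moreover have "models {0,1} (\<lambda>x y. x) (\<lambda>x::nat. x) ({A9, J4, J5} - {e})"
      using 1 distinct3 by (auto simp: models_def sat_def J4_def J5_def)
    moreover have "\<not> sat {0,1} (\<lambda>x y. x) (\<lambda>x::nat. x) e"
    proof
      assume "sat {0,1} (\<lambda>x y. x) (\<lambda>x::nat. x) e"
      then have "\<forall>v::nat\<Rightarrow>nat. (\<forall>i. v i \<in> {0,1}) \<longrightarrow> v 0 = v 2" unfolding 1 sat_def A9_def by simp
      then have "(\<lambda>i::nat. if i = 0 then 0 else 1::nat) 0 = (\<lambda>i::nat. if i = 0 then 0 else 1::nat) 2"
        by (rule allE[of _ "\<lambda>i::nat. if i = 0 then 0 else 1::nat"]) (auto split: if_splits)
      then show False by simp
    qed
    ultimately show ?thesis by blast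
  next
    case 2
    have "algebra {0,1} (\<lambda>x y. 0) (\<lambda>x::nat. 0)" by (auto simp: algebra_def)
    moreover have "models {0,1} (\<lambda>x y. 0) (\<lambda>x::nat. 0) ({A9, J4, J5} - {e})"
      using 2 distinct3 by (auto simp: models_def sat_def A9_def J5_def)
    moreover have "\<not> sat {0,1} (\<lambda>x y. 0) (\<lambda>x::nat. 0) e"
      unfolding 2 sat_def J4_def by (auto intro!: exI[of _ "\<lambda>i. 1"])
    ultimately show ?thesis by blast
  next
    case 3
    have "algebra {0,1} (\<lambda>x y. 0) (\<lambda>x::nat. x)" by (auto simp: algebra_def)
    moreover have "models {0,1} (\<lambda>x y. 0) (\<lambda>x::nat. x) ({A9, J4, J5} - {e})"
      using 3 distinct3 by (auto simp: models_def sat_def A9_def J4_def)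
    moreover have "\<not> sat {0,1} (\<lambda>x y. 0) (\<lambda>x::nat. x) e"
      unfolding 3 sat_def J5_def by (auto intro!: exI[of _ "\<lambda>i. 1"])
    ultimately show ?thesis by blast
  qed
qed

theorem theorem7p1:
  shows "defines_BA TYPE('a) {A9, J4, J5} \<and> independent {A9, J4, J5}
         \<and> card {A9, J4, J5} = 3"
  using defines_part indep_part distinct3 by simp

end
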